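(* Let $f:(X,P,\varphi_X)\to(Y,Q,\varphi_Y)$ be a stratified map such that $\widehat f=\alpha:P\to Q$ is an isomorphism of posets. Then the filtered map $f^\triangleleft:(X,P,\varphi_X)\to(Y\times_QP,P,\alpha^*\varphi_Y)$, $x\mapsto(f(x),\varphi_X(x))$, is a weak-equivalence in $\mathrm{Top}_P$ if and only if $f$ induces an isomorphism $s\pi_0(f):s\pi_0(X,P,\varphi_X)\to s\pi_0(Y,Q,\varphi_Y)\circ\widehat f$ and isomorphisms $s\pi_n(f):s\pi_n((X,P,\varphi_X),\phi)\to s\pi_n((Y,Q,\varphi_Y),f\circ\phi)\circ\widehat f$ for every pointing $\phi$ of $(X,P,\varphi_X)$ and every $n\geq1$.
   Context: $\mathrm{Top}$ is the category of $\Delta$-generated spaces. A stratified space is $(X,P,\varphi_X)$ with $P$ a poset and $\varphi_X:X\to P$ continuous for the Alexandrov topology; a stratified map is a continuous $f:X\to Y$ with an order-preserving $\widehat f:P\to Q$ such that $\varphi_Y\circ f=\widehat f\circ\varphi_X$. $\mathrm{Top}_P$ is the subcategory over fixed $P$ with $\widehat f=\mathrm{Id}_P$. $Y\times_QP$ is the pullback of $\varphi_Y$ and $\alpha$, with $\alpha^*\varphi_Y$ the projection to $P$. $\varphi_P:\|N(P)\|\to P$ sends $(\{p_0<\dots<p_n\},t)$, $t$ interior, to $p_n$; for a nondegenerate simplex $\varphi:\Delta^n\hookrightarrow N(P)$ (written $\Delta^\varphi$), $\|\Delta^\varphi\|_P=(\|\Delta^n\|,\varphi_P\circ\|\varphi\|)$,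 and $\mathcal C^0_P(A,X)$ is the space of filtered maps. Weak-equivalences in $\mathrm{Top}_P$: $g:X\to X'$ such that for every nondegenerate $\Delta^\varphi$, $\mathrm{Sing}\,\mathcal C^0_{N(P)}(\|\Delta^\varphi\|_{N(P)},g\times_P\|N(P)\|)$ is a weak equivalence of simplicial sets (here $X\times_P\|N(P)\|$ is the pullback along $\varphi_P$, $\|\Delta^\varphi\|_{N(P)}=(\|\Delta^n\|,\|\varphi\|)$ and $\mathcal C^0_{N(P)}$ the space of maps over $\|N(P)\|$). $s\pi_0(X,P,\varphi_X)$ is the functor on nondegenerate simplices (opposite inclusion order) $\Delta^\psi\mapsto\pi_0\mathcal C^0_P(\|\Delta^\psi\|_P,X)$. A pointing is a filtered map $\phi:\|\Delta^\varphi\|_P\to X$; $s\pi_n((X,P,\varphi_X),\phi)$, $n\ge1$, is the functor on faces $\Delta^\psi\subseteq\Delta^\varphi$ (opposite) given by $\pi_n(\mathcal C^0_P(\|\Delta^\psi\|_P,X),\phi|_{\|\Delta^\psi\|_P})$. $f\circ\phi$ is the pointing $\|\Delta^{\widehat f\circ\varphi}\|_Q\to Y$; $s\pi_n(Y,f\circ\phi)\circ\widehat f$ and $s\pi_0(Y)\circ\widehat f$ are the functors $\Delta^\psi\mapsto s\pi_n(Y,f\circ\phi)(\Delta^{\widehat f\circ\psi})$, resp. $s\pi_0(Y)(\Delta^{\widehat f\circ\psi})$, and $s\pi_n(f)$ is induced by postcomposition with $f$. *)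

theory Defs
  imports "HOL-Analysis.Analysis" "HOL-Homology.Simplices"
begin

definition simplex_top :: "nat \<Rightarrow> (nat \<Rightarrow> real) topology" where
  "simplex_top n = subtopology (powertop_real UNIV) (standard_simplex n)"

text \<open>Delta-ification: a set is open iff its preimage under every continuous map
  from a topological simplex is open.\<close>
definition dgen :: "'a topology \<Rightarrow> 'a topology" where
  "dgen T = topology (\<lambda>U. U \<subseteq> topspace T \<and>
     (\<forall>n \<sigma>. continuous_map (simplex_top n) T \<sigma> \<longrightarrow>
        openin (simplex_top n) {s \<in> topspace (simplex_top n). \<sigma> s \<in> U}))"

definition delta_generated :: "'a topology \<Rightarrow> bool" where
  "delta_generated T \<longleftrightarrow> dgen T = T"

text \<open>Alexandrov topology of the poset P (opens = upward closed subsets); this is the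
  convention making \<open>\<phi>\<^sub>P\<close> (sending an open simplex to its maximal vertex) continuous.\<close>
definition alex :: "'p::order set \<Rightarrow> 'p topology" where
  "alex P = topology (\<lambda>U. U \<subseteq> P \<and> (\<forall>x\<in>U. \<forall>y\<in>P. x \<le> y \<longrightarrow> y \<in> U))"

definition stratified :: "'a topology \<Rightarrow> 'p::order set \<Rightarrow> ('a \<Rightarrow> 'p) \<Rightarrow> bool" where
  "stratified X P \<phi> \<longleftrightarrow> delta_generated X \<and> \<phi> \<in> topspace X \<rightarrow> P \<and>
     continuous_map X (alex P) \<phi>"

definition poset_iso :: "'p::order set \<Rightarrow> 'q::order set \<Rightarrow> ('p \<Rightarrow> 'q) \<Rightarrow> bool" where
  "poset_iso P Q \<alpha> \<longleftrightarrow> bij_betw \<alpha> P Q \<and> (\<forall>x\<in>P. \<forall>y\<in>P. x \<le> y \<longleftrightarrow> \<alpha> x \<le> \<alpha> y)"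

definition stratified_map ::
  "'a topology \<Rightarrow> 'p::order set \<Rightarrow> ('a \<Rightarrow> 'p) \<Rightarrow> 'b topology \<Rightarrow> 'q::order set \<Rightarrow> ('b \<Rightarrow> 'q)
   \<Rightarrow> ('a \<Rightarrow> 'b) \<Rightarrow> ('p \<Rightarrow> 'q) \<Rightarrow> bool" where
  "stratified_map X P \<phi>X Y Q \<phi>Y f \<alpha> \<longleftrightarrow> continuous_map X Y f \<and> \<alpha> \<in> P \<rightarrow> Q \<and>
     (\<forall>x\<in>P. \<forall>y\<in>P. x \<le> y \<longrightarrow> \<alpha> x \<le> \<alpha> y) \<and> (\<forall>x\<in>topspace X. \<phi>Y (f x) = \<alpha> (\<phi>X x))"

definition nd_simplex :: "'p::order set \<Rightarrow> nat \<Rightarrow> (nat \<Rightarrow> 'p) \<Rightarrow> bool" where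
  "nd_simplex P n c \<longleftrightarrow> (\<forall>i\<le>n. c i \<in> P) \<and> (\<forall>i j. i < j \<longrightarrow> j \<le> n \<longrightarrow> c i < c j)"

definition face :: "nat \<Rightarrow> nat \<Rightarrow> (nat \<Rightarrow> nat) \<Rightarrow> bool" where
  "face k m d \<longleftrightarrow> (\<forall>i\<le>k. d i \<le> m) \<and> (\<forall>i j. i < j \<longrightarrow> j \<le> k \<longrightarrow> d i < d j)"

text \<open>Affine map of a simplex induced by a vertex map (used for \<open>\<parallel>\<phi>\<parallel>\<close> and face maps).\<close>
definition push :: "(nat \<Rightarrow> 'v) \<Rightarrow> nat \<Rightarrow> (nat \<Rightarrow> real) \<Rightarrow> ('v \<Rightarrow> real)" where
  "push c n s = (\<lambda>v. \<Sum>i\<in>{i. i \<le> n \<and> c i = v}. s i)"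

text \<open>Points of the realization \<open>\<parallel>N(P)\<parallel>\<close>: barycentric coordinates supported on a finite
  nonempty chain of P.\<close>
definition nerve_pts :: "'p::order set \<Rightarrow> ('p \<Rightarrow> real) set" where
  "nerve_pts P = {t. (\<forall>p. 0 \<le> t p) \<and> finite {p. t p \<noteq> 0} \<and> {p. t p \<noteq> 0} \<subseteq> P \<and>
     (\<forall>p q. t p \<noteq> 0 \<longrightarrow> t q \<noteq> 0 \<longrightarrow> p \<le> q \<or> q \<le> p) \<and> (\<Sum>p\<in>{p. t p \<noteq> 0}. t p) = 1}"

definition nerve_top :: "'p::order set \<Rightarrow> ('p \<Rightarrow> real) topology" where
  "nerve_top P = topology (\<lambda>U. U \<subseteq> nerve_pts P \<and>
     (\<forall>n c. nd_simplex P n c \<longrightarrow>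
        openin (simplex_top n) {s \<in> standard_simplex n. push c n s \<in> U}))"

definition nerve_strat :: "('p::order \<Rightarrow> real) \<Rightarrow> 'p" where
  "nerve_strat t = (THE p. t p \<noteq> 0 \<and> (\<forall>q. t q \<noteq> 0 \<longrightarrow> q \<le> p))"

definition pullback_top ::
  "'a topology \<Rightarrow> ('a \<Rightarrow> 'c) \<Rightarrow> 'b topology \<Rightarrow> ('b \<Rightarrow> 'c) \<Rightarrow> ('a \<times> 'b) topology" where
  "pullback_top T \<phi> S \<psi> = dgen (subtopology (prod_topology T S)
      {(x, y). x \<in> topspace T \<and> y \<in> topspace S \<and> \<phi> x = \<psi> y})"

definition compact_open :: "'a topology \<Rightarrow> 'b topology \<Rightarrow> ('a \<Rightarrow> 'b) topology" where
  "compact_open A X = subtopology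
     (topology_generated_by
        {{g \<in> extensional (topspace A). g ` K \<subseteq> U} | K U. compactin A K \<and> openin X U})
     {g \<in> extensional (topspace A). continuous_map A X g}"

definition map_space ::
  "'x topology \<Rightarrow> ('x \<Rightarrow> 'c) \<Rightarrow> 'a topology \<Rightarrow> ('a \<Rightarrow> 'c) \<Rightarrow> ('x \<Rightarrow> 'a) topology" where
  "map_space A \<phi>A X \<phi>X = dgen (subtopology (compact_open A X)
      {g. \<forall>s\<in>topspace A. \<phi>X (g s) = \<phi>A s})"

text \<open>\<open>C\<^sup>0\<^sub>P(\<parallel>\<Delta>\<^sup>c\<parallel>\<^sub>P, X)\<close> with \<open>\<parallel>\<Delta>\<^sup>c\<parallel>\<^sub>P = (\<parallel>\<Delta>\<^sup>n\<parallel>, \<phi>\<^sub>P \<circ> \<parallel>c\<parallel>)\<close>.\<close>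
definition CP :: "nat \<Rightarrow> (nat \<Rightarrow> 'p::order) \<Rightarrow> 'a topology \<Rightarrow> ('a \<Rightarrow> 'p)
    \<Rightarrow> ((nat \<Rightarrow> real) \<Rightarrow> 'a) topology" where
  "CP n c X \<phi>X = map_space (simplex_top n) (\<lambda>s. nerve_strat (push c n s)) X \<phi>X"

definition CN :: "'p::order set \<Rightarrow> nat \<Rightarrow> (nat \<Rightarrow> 'p) \<Rightarrow> 'a topology \<Rightarrow> ('a \<Rightarrow> 'p)
    \<Rightarrow> ((nat \<Rightarrow> real) \<Rightarrow> 'a \<times> ('p \<Rightarrow> real)) topology" where
  "CN P n c X \<phi>X = map_space (simplex_top n) (push c n)
      (pullback_top X \<phi>X (nerve_top P) nerve_strat) snd"

definition postcomp :: "'x topology \<Rightarrow> ('a \<Rightarrow> 'b) \<Rightarrow> ('x \<Rightarrow> 'a) \<Rightarrow> ('x \<Rightarrow> 'b)" where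
  "postcomp A f g = restrict (f \<circ> g) (topspace A)"

definition cube_top :: "nat \<Rightarrow> (nat \<Rightarrow> real) topology" where
  "cube_top n = subtopology (powertop_real UNIV)
     {x. (\<forall>i<n. 0 \<le> x i \<and> x i \<le> 1) \<and> (\<forall>i\<ge>n. x i = 0)}"

definition cube_bdry :: "nat \<Rightarrow> (nat \<Rightarrow> real) set" where
  "cube_bdry n = {x \<in> topspace (cube_top n). \<exists>i<n. x i = 0 \<or> x i = 1}"

definition sph_map :: "nat \<Rightarrow> 'a topology \<Rightarrow> 'a \<Rightarrow> ((nat \<Rightarrow> real) \<Rightarrow> 'a) \<Rightarrow> bool" where
  "sph_map n T x0 h \<longleftrightarrow> continuous_map (cube_top n) T h \<and> h ` cube_bdry n \<subseteq> {x0}"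

definition rel_homotopic ::
  "nat \<Rightarrow> 'a topology \<Rightarrow> 'a \<Rightarrow> ((nat \<Rightarrow> real) \<Rightarrow> 'a) \<Rightarrow> ((nat \<Rightarrow> real) \<Rightarrow> 'a) \<Rightarrow> bool" where
  "rel_homotopic n T x0 h1 h2 \<longleftrightarrow>
     homotopic_with (\<lambda>h. h ` cube_bdry n \<subseteq> {x0}) (cube_top n) T
       (restrict h1 (topspace (cube_top n))) (restrict h2 (topspace (cube_top n)))"

definition pin_bij :: "nat \<Rightarrow> 'a topology \<Rightarrow> 'b topology \<Rightarrow> ('a \<Rightarrow> 'b) \<Rightarrow> 'a \<Rightarrow> bool" where
  "pin_bij n T T' h x0 \<longleftrightarrow>
     (\<forall>g'. sph_map n T' (h x0) g' \<longrightarrow>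
        (\<exists>g. sph_map n T x0 g \<and> rel_homotopic n T' (h x0) (h \<circ> g) g')) \<and>
     (\<forall>g1 g2. sph_map n T x0 g1 \<longrightarrow> sph_map n T x0 g2 \<longrightarrow>
        rel_homotopic n T' (h x0) (h \<circ> g1) (h \<circ> g2) \<longrightarrow> rel_homotopic n T x0 g1 g2)"

definition pi0_bij :: "'a topology \<Rightarrow> 'b topology \<Rightarrow> ('a \<Rightarrow> 'b) \<Rightarrow> bool" where
  "pi0_bij T T' h \<longleftrightarrow>
     bij_betw (\<lambda>C. path_component_of_set T' (h (SOME x. x \<in> C)))
       (path_components_of T) (path_components_of T')"

definition weak_homotopy_equiv :: "'a topology \<Rightarrow> 'b topology \<Rightarrow> ('a \<Rightarrow> 'b) \<Rightarrow> bool" where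
  "weak_homotopy_equiv T T' h \<longleftrightarrow> pi0_bij T T' h \<and>
     (\<forall>x0\<in>topspace T. \<forall>n\<ge>1. pin_bij n T T' h x0)"

definition weq_TopP :: "'p::order set \<Rightarrow> 'a topology \<Rightarrow> ('a \<Rightarrow> 'p) \<Rightarrow> 'b topology \<Rightarrow> ('b \<Rightarrow> 'p)
    \<Rightarrow> ('a \<Rightarrow> 'b) \<Rightarrow> bool" where
  "weq_TopP P X \<phi>X X' \<phi>X' g \<longleftrightarrow>
     (\<forall>n c. nd_simplex P n c \<longrightarrow>
        weak_homotopy_equiv (CN P n c X \<phi>X) (CN P n c X' \<phi>X')
          (postcomp (simplex_top n) (\<lambda>(x, t). (g x, t))))"

definition spi0_iso :: "'p::order set \<Rightarrow> 'a topology \<Rightarrow> ('a \<Rightarrow> 'p)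
    \<Rightarrow> 'b topology \<Rightarrow> ('b \<Rightarrow> 'q::order) \<Rightarrow> ('a \<Rightarrow> 'b) \<Rightarrow> ('p \<Rightarrow> 'q) \<Rightarrow> bool" where
  "spi0_iso P X \<phi>X Y \<phi>Y f \<alpha> \<longleftrightarrow>
     (\<forall>n c. nd_simplex P n c \<longrightarrow>
        pi0_bij (CP n c X \<phi>X) (CP n (\<alpha> \<circ> c) Y \<phi>Y) (postcomp (simplex_top n) f))"

text \<open>For every pointing \<open>\<phi> : \<parallel>\<Delta>\<^sup>c\<parallel>\<^sub>P \<rightarrow> X\<close> and every k \<ge> 1,
  \<open>s\<pi>\<^sub>k(f) : s\<pi>\<^sub>k(X,\<phi>) \<rightarrow> s\<pi>\<^sub>k(Y, f\<circ>\<phi>) \<circ> f\<^sup>^\<close> is an isomorphism, i.e. bijective at every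
  face \<open>c \<circ> d\<close> of c.\<close>
definition spin_iso :: "'p::order set \<Rightarrow> 'a topology \<Rightarrow> ('a \<Rightarrow> 'p)
    \<Rightarrow> 'b topology \<Rightarrow> ('b \<Rightarrow> 'q::order) \<Rightarrow> ('a \<Rightarrow> 'b) \<Rightarrow> ('p \<Rightarrow> 'q) \<Rightarrow> bool" where
  "spin_iso P X \<phi>X Y \<phi>Y f \<alpha> \<longleftrightarrow>
     (\<forall>m c \<phi>. nd_simplex P m c \<longrightarrow> \<phi> \<in> topspace (CP m c X \<phi>X) \<longrightarrow>
        (\<forall>k d. face k m d \<longrightarrow> (\<forall>n\<ge>1.
           pin_bij n (CP k (c \<circ> d) X \<phi>X) (CP k (\<alpha> \<circ> c \<circ> d) Y \<phi>Y)
             (postcomp (simplex_top k) f)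
             (restrict (\<phi> \<circ> push d k) (topspace (simplex_top k))))))"

end

theory Submission
  imports Defs
begin


lemma istopology_dgen:
  "istopology (\<lambda>U. U \<subseteq> topspace T \<and>
     (\<forall>n \<sigma>. continuous_map (simplex_top n) T \<sigma> \<longrightarrow>
        openin (simplex_top n) {s \<in> topspace (simplex_top n). \<sigma> s \<in> U}))"
proof -
  have 1: "{s \<in> topspace (simplex_top n). \<sigma> s \<in> U \<inter> V} =
     {s \<in> topspace (simplex_top n). \<sigma> s \<in> U} \<inter> {s \<in> topspace (simplex_top n). \<sigma> s \<in> V}" for n \<sigma> U V
    by auto
  have 2: "{s \<in> topspace (simplex_top n). \<sigma> s \<in> \<Union>K} =
     (\<Union>U\<in>K. {s \<in> topspace (simplex_top n). \<sigma> s \<in> U})" for n \<sigma> K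
    by auto
  show ?thesis unfolding istopology_def 1 2
    by (auto intro!: openin_Union)
qed

lemma openin_dgen:
  "openin (dgen T) U \<longleftrightarrow> U \<subseteq> topspace T \<and>
     (\<forall>n \<sigma>. continuous_map (simplex_top n) T \<sigma> \<longrightarrow>
        openin (simplex_top n) {s \<in> topspace (simplex_top n). \<sigma> s \<in> U})"
  unfolding dgen_def using istopology_dgen[of T] by (simp add: topology_inverse')

lemma openin_imp_openin_dgen: "openin T U \<Longrightarrow> openin (dgen T) U"
  unfolding openin_dgen
  by (simp add: openin_subset openin_continuous_map_preimage)

lemma topspace_dgen [simp]: "topspace (dgen T) = topspace T"
proof
  show "topspace (dgen T) \<subseteq> topspace T"
    by (meson openin_dgen openin_topspace)
  show "topspace T \<subseteq> topspace (dgen T)"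
    using openin_imp_openin_dgen[OF openin_topspace[of T]] openin_subset by blast
qed

lemma continuous_map_dgen_id: "continuous_map (dgen T) T (\<lambda>x. x)"
  unfolding continuous_map_def
proof (intro conjI allI impI)
  show "(\<lambda>x. x) \<in> topspace (dgen T) \<rightarrow> topspace T" by simp
  fix U assume U: "openin T U"
  then have "{x \<in> topspace (dgen T). x \<in> U} = U" using openin_subset by auto
  then show "openin (dgen T) {x \<in> topspace (dgen T). x \<in> U}"
    using openin_imp_openin_dgen[OF U] by simp
qed

lemma continuous_map_from_dgen_imp: "continuous_map K (dgen T) h \<Longrightarrow> continuous_map K T h"
  using continuous_map_compose[OF _ continuous_map_dgen_id] by (simp add: o_def)

lemma dgen_cont:
  assumes "\<And>x. x \<in> topspace A \<Longrightarrow> \<Phi> x \<in> topspace B"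
    and "\<And>n \<sigma>. continuous_map (simplex_top n) A \<sigma> \<Longrightarrow> continuous_map (simplex_top n) B (\<Phi> \<circ> \<sigma>)"
  shows "continuous_map (dgen A) (dgen B) \<Phi>"
  unfolding continuous_map_def
proof (intro conjI allI impI)
  show "\<Phi> \<in> topspace (dgen A) \<rightarrow> topspace (dgen B)" using assms(1) by auto
  fix V assume V: "openin (dgen B) V"
  show "openin (dgen A) {x \<in> topspace (dgen A). \<Phi> x \<in> V}"
    unfolding openin_dgen
  proof (intro conjI allI impI)
    show "{x \<in> topspace (dgen A). \<Phi> x \<in> V} \<subseteq> topspace A" by auto
    fix n \<sigma> assume \<sigma>: "continuous_map (simplex_top n) A \<sigma>"
    have eq: "{s \<in> topspace (simplex_top n). \<sigma> s \<in> {x \<in> topspace (dgen A). \<Phi> x \<in> V}}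
        = {s \<in> topspace (simplex_top n). (\<Phi> \<circ> \<sigma>) s \<in> V}"
      using \<sigma> by (auto simp: continuous_map_def)
    have "openin (simplex_top n) {s \<in> topspace (simplex_top n). (\<Phi> \<circ> \<sigma>) s \<in> V}"
      using V assms(2)[OF \<sigma>] unfolding openin_dgen by blast
    then show "openin (simplex_top n) {s \<in> topspace (simplex_top n). \<sigma> s \<in> {x \<in> topspace (dgen A). \<Phi> x \<in> V}}"
      by (simp only: eq)
  qed
qed

lemma dgen_cont_simple:
  assumes "continuous_map A B \<Phi>" shows "continuous_map (dgen A) (dgen B) \<Phi>"
proof (rule dgen_cont)
  show "\<Phi> x \<in> topspace B" if "x \<in> topspace A" for x using assms that by (auto simp: continuous_map_def)
  show "continuous_map (simplex_top n) B (\<Phi> \<circ> \<sigma>)" if "continuous_map (simplex_top n) A \<sigma>" for n \<sigma>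
    using continuous_map_compose[OF that assms] .
qed

lemma istopology_alex:
  "istopology (\<lambda>U. U \<subseteq> P \<and> (\<forall>x\<in>U. \<forall>y\<in>P. x \<le> y \<longrightarrow> y \<in> U))"
  unfolding istopology_def by blast

lemma openin_alex:
  "openin (alex P) U \<longleftrightarrow> U \<subseteq> P \<and> (\<forall>x\<in>U. \<forall>y\<in>P. x \<le> y \<longrightarrow> y \<in> U)"
  unfolding alex_def using istopology_alex[of P] by (simp add: topology_inverse')

lemma topspace_alex [simp]: "topspace (alex P) = P"
proof
  show "topspace (alex P) \<subseteq> P" by (meson openin_alex openin_topspace)
  have "openin (alex P) P" by (simp add: openin_alex)
  then show "P \<subseteq> topspace (alex P)" using openin_subset by blast
qed

lemma istopology_nerve:
  "istopology (\<lambda>U. U \<subseteq> nerve_pts P \<and>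
     (\<forall>n c. nd_simplex P n c \<longrightarrow>
        openin (simplex_top n) {s \<in> standard_simplex n. push c n s \<in> U}))"
proof -
  have 1: "{s \<in> standard_simplex n. push c n s \<in> U \<inter> V} =
     {s \<in> standard_simplex n. push c n s \<in> U} \<inter> {s \<in> standard_simplex n. push c n s \<in> V}" for n c U V
    by auto
  have 2: "{s \<in> standard_simplex n. push c n s \<in> \<Union>K} =
     (\<Union>U\<in>K. {s \<in> standard_simplex n. push c n s \<in> U})" for n c K
    by auto
  show ?thesis unfolding istopology_def 1 2
    by (auto intro!: openin_Union)
qed

lemma openin_nerve:
  "openin (nerve_top P) U \<longleftrightarrow> U \<subseteq> nerve_pts P \<and>
     (\<forall>n c. nd_simplex P n c \<longrightarrow>
        openin (simplex_top n) {s \<in> standard_simplex n. push c n s \<in> U})"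
  unfolding nerve_top_def using istopology_nerve[of P] by (simp add: topology_inverse')

lemma topspace_simplex_top [simp]: "topspace (simplex_top n) = standard_simplex n"
  by (simp add: simplex_top_def)


definition sinc :: "nat \<Rightarrow> (nat \<Rightarrow> 'p::order) \<Rightarrow> bool" where
  "sinc n c \<longleftrightarrow> (\<forall>i j. i < j \<longrightarrow> j \<le> n \<longrightarrow> c i < c j)"

lemma nd_sinc: "nd_simplex P n c \<Longrightarrow> sinc n c"
  by (simp add: nd_simplex_def sinc_def)

lemma sinc_inj: "sinc n c \<Longrightarrow> i \<le> n \<Longrightarrow> j \<le> n \<Longrightarrow> c i = c j \<Longrightarrow> i = j"
  unfolding sinc_def by (metis less_irrefl nat_neq_iff)

lemma sinc_mono: "sinc n c \<Longrightarrow> i \<le> j \<Longrightarrow> j \<le> n \<Longrightarrow> c i \<le> c j"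
  unfolding sinc_def by (metis le_less)

lemma sinc_comp:
  assumes "sinc n c" "\<forall>i\<le>n. c i \<in> P" "\<forall>x\<in>P. \<forall>y\<in>P. x \<le> y \<longleftrightarrow> \<alpha> x \<le> \<alpha> y" "inj_on \<alpha> P"
  shows "sinc n (\<alpha> \<circ> c)"
  unfolding sinc_def
proof (intro allI impI)
  fix i j assume ij: "i < j" "j \<le> n"
  then have "c i < c j" using assms(1) by (simp add: sinc_def)
  moreover have "c i \<in> P" "c j \<in> P" using assms(2) ij by auto
  ultimately show "(\<alpha> \<circ> c) i < (\<alpha> \<circ> c) j"
  proof -
    have "\<alpha> (c i) \<le> \<alpha> (c j)" using assms(3) \<open>c i \<in> P\<close> \<open>c j \<in> P\<close> \<open>c i < c j\<close> by (meson less_imp_le)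
    moreover have "\<alpha> (c i) \<noteq> \<alpha> (c j)"
      using assms(4) \<open>c i \<in> P\<close> \<open>c j \<in> P\<close> \<open>c i < c j\<close> by (metis inj_onD less_irrefl)
    ultimately show ?thesis by (simp add: less_le)
  qed
qed

lemma push_nonneg: "s \<in> standard_simplex n \<Longrightarrow> 0 \<le> push c n s v"
  unfolding push_def by (rule sum_nonneg) (simp add: standard_simplex_def)

lemma push_at:
  assumes "sinc n c" "i \<le> n" shows "push c n s (c i) = s i"
proof -
  have "{j. j \<le> n \<and> c j = c i} = {i}" using sinc_inj[OF assms(1)] assms(2) by auto
  then show ?thesis by (simp add: push_def)
qed

lemma push_out: "v \<notin> c ` {..n} \<Longrightarrow> push c n s v = 0"
proof -
  assume "v \<notin> c ` {..n}"
  then have eq: "{j. j \<le> n \<and> c j = v} = {}" by auto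
  show ?thesis unfolding push_def eq by simp
qed

lemma push_nz: "push c n s v \<noteq> 0 \<Longrightarrow> \<exists>j\<le>n. v = c j"
  using push_out[of v c n s] by auto

lemma push_sum_image:
  "(\<Sum>v \<in> c ` {..n}. push c n s v) = (\<Sum>i\<le>n. s i)"
  unfolding push_def
  using sum.group[of "{..n}" "c ` {..n}" c s] by (simp add: atMost_def)

definition imax :: "nat \<Rightarrow> (nat \<Rightarrow> real) \<Rightarrow> nat" where
  "imax n s = Max {i. i \<le> n \<and> s i \<noteq> 0}"

lemma imax_props:
  assumes "s \<in> standard_simplex n"
  shows "imax n s \<le> n" "s (imax n s) \<noteq> 0" "\<And>j. j \<le> n \<Longrightarrow> s j \<noteq> 0 \<Longrightarrow> j \<le> imax n s"
proof -
  have ne: "{i. i \<le> n \<and> s i \<noteq> 0} \<noteq> {}"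
  proof
    assume "{i. i \<le> n \<and> s i \<noteq> 0} = {}"
    then have "(\<Sum>i\<le>n. s i) = 0" by (intro sum.neutral) auto
    then show False using assms by (simp add: standard_simplex_def)
  qed
  have fin: "finite {i. i \<le> n \<and> s i \<noteq> 0}" by simp
  have "imax n s \<in> {i. i \<le> n \<and> s i \<noteq> 0}" unfolding imax_def using Max_in[OF fin ne] .
  then show "imax n s \<le> n" "s (imax n s) \<noteq> 0" by auto
  show "\<And>j. j \<le> n \<Longrightarrow> s j \<noteq> 0 \<Longrightarrow> j \<le> imax n s"
    unfolding imax_def using Max_ge[OF fin] by auto
qed

lemma nerve_strat_eq:
  assumes "t p \<noteq> 0" "\<And>q. t q \<noteq> 0 \<Longrightarrow> q \<le> p"
  shows "nerve_strat t = (p::'p::order)"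
  unfolding nerve_strat_def
  by (rule the_equality) (use assms in \<open>auto intro: order.antisym\<close>)

lemma ns_push:
  assumes "sinc n c" "s \<in> standard_simplex n"
  shows "nerve_strat (push c n s) = c (imax n s)"
proof (rule nerve_strat_eq)
  show "push c n s (c (imax n s)) \<noteq> 0"
    using push_at[OF assms(1) imax_props(1)[OF assms(2)]] imax_props(2)[OF assms(2)] by simp
  fix q assume q: "push c n s q \<noteq> 0"
  from push_nz[OF q] obtain j where j: "j \<le> n" "q = c j" by blast
  then have "s j \<noteq> 0" using q push_at[OF assms(1) j(1)] by simp
  then have "j \<le> imax n s" using imax_props(3)[OF assms(2) j(1)] by simp
  then show "q \<le> c (imax n s)" using j sinc_mono[OF assms(1) _ imax_props(1)[OF assms(2)]] by simp
qed

lemma push_in_nerve: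
  assumes "nd_simplex P n c" "s \<in> standard_simplex n"
  shows "push c n s \<in> nerve_pts P"
proof -
  have sc: "sinc n c" using nd_sinc[OF assms(1)] .
  have sub: "{p. push c n s p \<noteq> 0} \<subseteq> c ` {..n}" using push_nz by fastforce
  have fin: "finite {p. push c n s p \<noteq> 0}" using finite_subset[OF sub] by simp
  have P: "{p. push c n s p \<noteq> 0} \<subseteq> P" using sub assms(1) by (auto simp: nd_simplex_def)
  have chain: "p \<le> q \<or> q \<le> p" if "push c n s p \<noteq> 0" "push c n s q \<noteq> 0" for p q
  proof -
    from push_nz[OF that(1)] obtain i where i: "i \<le> n" "p = c i" by blast
    from push_nz[OF that(2)] obtain j where j: "j \<le> n" "q = c j" by blast
    show ?thesis
    proof (cases "i \<le> j")
      case True then show ?thesis using sinc_mono[OF sc True j(1)] i j by simp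
    next
      case False then show ?thesis using sinc_mono[OF sc _ i(1), of j] i j by simp
    qed
  qed
  have "(\<Sum>p\<in>{p. push c n s p \<noteq> 0}. push c n s p) = (\<Sum>v \<in> c ` {..n}. push c n s v)"
    by (rule sum.mono_neutral_left) (use sub in auto)
  also have "\<dots> = (\<Sum>i\<le>n. s i)" by (rule push_sum_image)
  also have "\<dots> = 1" using assms(2) by (simp add: standard_simplex_def)
  finally show ?thesis
    unfolding nerve_pts_def using fin P chain push_nonneg[OF assms(2)] by auto
qed

lemma topspace_nerve: "topspace (nerve_top P) = nerve_pts P"
proof
  show "topspace (nerve_top P) \<subseteq> nerve_pts P" using openin_nerve openin_topspace by blast
  have "openin (nerve_top P) (nerve_pts P)"
    unfolding openin_nerve
  proof (intro conjI allI impI)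
    fix n c assume "nd_simplex P n c"
    then have "{s \<in> standard_simplex n. push c n s \<in> nerve_pts P} = topspace (simplex_top n)"
      using push_in_nerve by auto
    then show "openin (simplex_top n) {s \<in> standard_simplex n. push c n s \<in> nerve_pts P}"
      by (metis openin_topspace topspace_simplex_top)
  qed simp
  then show "nerve_pts P \<subseteq> topspace (nerve_top P)" using openin_subset by blast
qed

lemma push_cont_nerve:
  assumes "nd_simplex P n c"
  shows "continuous_map (simplex_top n) (nerve_top P) (push c n)"
  unfolding continuous_map_def
proof (intro conjI allI impI)
  show "push c n \<in> topspace (simplex_top n) \<rightarrow> topspace (nerve_top P)"
    using push_in_nerve[OF assms] by (auto simp: topspace_nerve)
  fix U assume "openin (nerve_top P) U"
  then show "openin (simplex_top n) {x \<in> topspace (simplex_top n). push c n x \<in> U}"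
    using assms unfolding openin_nerve by simp
qed

lemma coord_open:
  "openin (simplex_top n) {s \<in> standard_simplex n. 0 < s i}"
proof -
  have "continuous_map (simplex_top n) euclideanreal (\<lambda>s. s i)"
    unfolding simplex_top_def
    by (rule continuous_map_from_subtopology)
       (use continuous_map_product_projection[of i UNIV "\<lambda>i. euclideanreal"] in simp)
  from openin_continuous_map_preimage[OF this, of "{0<..}"]
  show ?thesis by simp
qed

lemma ns_cont:
  assumes "nd_simplex P n c"
  shows "continuous_map (simplex_top n) (alex P) (\<lambda>s. nerve_strat (push c n s))"
  unfolding continuous_map_def
proof (intro conjI allI impI)
  have sc: "sinc n c" using nd_sinc[OF assms] .
  show "(\<lambda>s. nerve_strat (push c n s)) \<in> topspace (simplex_top n) \<rightarrow> topspace (alex P)"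
    using assms imax_props(1) by (auto simp: ns_push[OF sc] nd_simplex_def)
  fix U assume U: "openin (alex P) U"
  have eq: "{x \<in> topspace (simplex_top n). nerve_strat (push c n x) \<in> U}
      = (\<Union>i\<in>{i. i \<le> n \<and> c i \<in> U}. {s \<in> standard_simplex n. 0 < s i})"
  proof (intro equalityI subsetI)
    fix s assume "s \<in> {x \<in> topspace (simplex_top n). nerve_strat (push c n x) \<in> U}"
    then have s: "s \<in> standard_simplex n" "c (imax n s) \<in> U" by (auto simp: ns_push[OF sc])
    have "0 \<le> s (imax n s)" using s(1) by (simp add: standard_simplex_def)
    then have "0 < s (imax n s)" using imax_props(2)[OF s(1)] by simp
    then show "s \<in> (\<Union>i\<in>{i. i \<le> n \<and> c i \<in> U}. {s \<in> standard_simplex n. 0 < s i})"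
      using s imax_props(1)[OF s(1)] by auto
  next
    fix s assume "s \<in> (\<Union>i\<in>{i. i \<le> n \<and> c i \<in> U}. {s \<in> standard_simplex n. 0 < s i})"
    then obtain i where i: "i \<le> n" "c i \<in> U" "s \<in> standard_simplex n" "0 < s i" by auto
    have "i \<le> imax n s" using imax_props(3)[OF i(3) i(1)] i(4) by simp
    then have "c i \<le> c (imax n s)" using sinc_mono[OF sc _ imax_props(1)[OF i(3)]] by simp
    moreover have "c (imax n s) \<in> P" using assms imax_props(1)[OF i(3)] by (simp add: nd_simplex_def)
    ultimately have "c (imax n s) \<in> U" using U i(2) unfolding openin_alex by blast
    then show "s \<in> {x \<in> topspace (simplex_top n). nerve_strat (push c n x) \<in> U}"
      using i(3) by (simp add: ns_push[OF sc])
  qed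
  show "openin (simplex_top n) {x \<in> topspace (simplex_top n). nerve_strat (push c n x) \<in> U}"
    unfolding eq by (intro openin_Union) (auto simp: coord_open)
qed

lemma push_face_simplex:
  assumes "face k m d" "s \<in> standard_simplex k"
  shows "push d k s \<in> standard_simplex m"
proof -
  have nn: "0 \<le> push d k s i" for i using push_nonneg[OF assms(2)] .
  have le1: "push d k s i \<le> 1" for i
  proof -
    have "push d k s i \<le> (\<Sum>j\<le>k. s j)"
      unfolding push_def
      by (rule sum_mono2) (use assms(2) in \<open>auto simp: standard_simplex_def\<close>)
    then show ?thesis using assms(2) by (simp add: standard_simplex_def)
  qed
  have z: "push d k s i = 0" if "m < i" for i
  proof -
    have eq: "{j. j \<le> k \<and> d j = i} = {}" using assms(1) that by (auto simp: face_def)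
    show ?thesis unfolding push_def eq by simp
  qed
  have "(\<Sum>i\<le>m. push d k s i) = (\<Sum>j\<le>k. s j)"
    unfolding push_def
    using sum.group[of "{..k}" "{..m}" d s] assms(1) by (auto simp: face_def atMost_def)
  then have "(\<Sum>i\<le>m. push d k s i) = 1" using assms(2) by (simp add: standard_simplex_def)
  then show ?thesis using nn le1 z by (simp add: standard_simplex_def)
qed

lemma push_face_comp:
  assumes "face k m d"
  shows "push c m (push d k s) = push (c \<circ> d) k s"
proof
  fix v
  have "push c m (push d k s) v = (\<Sum>i\<in>{i. i \<le> m \<and> c i = v}. \<Sum>j\<in>{j. j \<le> k \<and> d j = i}. s j)"
    by (simp add: push_def)
  also have "\<dots> = (\<Sum>i\<in>{i. i \<le> m \<and> c i = v}. \<Sum>j\<in>{j. j \<in> {j. j \<le> k \<and> c (d j) = v} \<and> d j = i}. s j)"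
    by (intro sum.cong refl) auto
  also have "\<dots> = (\<Sum>j\<in>{j. j \<le> k \<and> c (d j) = v}. s j)"
    by (rule sum.group) (use assms in \<open>auto simp: face_def\<close>)
  finally show "push c m (push d k s) v = push (c \<circ> d) k s v" by (simp add: push_def)
qed

lemma coord_cont: "continuous_map (simplex_top n) euclideanreal (\<lambda>s. s i)"
  unfolding simplex_top_def
  by (rule continuous_map_from_subtopology)
     (use continuous_map_product_projection[of i UNIV "\<lambda>i. euclideanreal"] in simp)

lemma push_face_cont:
  assumes "face k m d"
  shows "continuous_map (simplex_top k) (simplex_top m) (push d k)"
proof -
  have "continuous_map (simplex_top k) (powertop_real UNIV) (push d k)"
    unfolding continuous_map_componentwise_UNIV push_def
  proof
    fix i
    show "continuous_map (simplex_top k) euclideanreal (\<lambda>x. \<Sum>j\<in>{j. j \<le> k \<and> d j = i}. x j)"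
      by (rule continuous_map_sum) (simp_all add: coord_cont)
  qed
  then show ?thesis
    using push_face_simplex[OF assms]
    by (auto simp: simplex_top_def continuous_map_in_subtopology)
qed

lemma face_id: "face m m (\<lambda>i. i)"
  by (simp add: face_def)

lemma push_id: "s \<in> standard_simplex m \<Longrightarrow> push (\<lambda>i. i) m s = s"
proof
  fix v assume s: "s \<in> standard_simplex m"
  show "push (\<lambda>i. i) m s v = s v"
  proof (cases "v \<le> m")
    case True
    then have "{i. i \<le> m \<and> i = v} = {v}" by auto
    then show ?thesis by (simp add: push_def)
  next
    case False
    then have "{i. i \<le> m \<and> i = v} = {}" by auto
    then show ?thesis using s False by (simp add: push_def standard_simplex_def)
  qed
qed


definition cosub :: "'x topology \<Rightarrow> 'a topology \<Rightarrow> ('x \<Rightarrow> 'a) set set" where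
  "cosub S Z = {{g \<in> extensional (topspace S). g ` K \<subseteq> U} | K U. compactin S K \<and> openin Z U}"

lemma compact_open_alt:
  "compact_open S Z = subtopology (topology_generated_by (cosub S Z))
     {g \<in> extensional (topspace S). continuous_map S Z g}"
  by (simp add: compact_open_def cosub_def)

lemma Union_cosub: "\<Union>(cosub S Z) = extensional (topspace S)"
proof
  show "\<Union>(cosub S Z) \<subseteq> extensional (topspace S)" by (auto simp: cosub_def)
  have "{g \<in> extensional (topspace S). g ` {} \<subseteq> {}} \<in> cosub S Z"
    unfolding cosub_def by (intro CollectI exI[of _ "{}"]) auto
  then show "extensional (topspace S) \<subseteq> \<Union>(cosub S Z)" by auto
qed

lemma topspace_compact_open:
  "topspace (compact_open S Z) = {g \<in> extensional (topspace S). continuous_map S Z g}"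
  unfolding compact_open_alt by (auto simp: Union_cosub)

lemma cont_into_compact_open:
  assumes "\<And>k. k \<in> topspace K \<Longrightarrow> \<sigma> k \<in> extensional (topspace S) \<and> continuous_map S Z (\<sigma> k)"
    and "\<And>C U. compactin S C \<Longrightarrow> openin Z U \<Longrightarrow> openin K {k \<in> topspace K. \<sigma> k ` C \<subseteq> U}"
  shows "continuous_map K (compact_open S Z) \<sigma>"
  unfolding compact_open_alt continuous_map_in_subtopology
proof
  show "\<sigma> \<in> topspace K \<rightarrow> {g \<in> extensional (topspace S). continuous_map S Z g}"
    using assms(1) by auto
  show "continuous_map K (topology_generated_by (cosub S Z)) \<sigma>"
  proof (rule continuous_on_generated_topo)
    show "\<sigma> ` topspace K \<subseteq> \<Union> (cosub S Z)" using assms(1) by (auto simp: Union_cosub)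
    fix U' assume "U' \<in> cosub S Z"
    then obtain C U where CU: "compactin S C" "openin Z U"
      "U' = {g \<in> extensional (topspace S). g ` C \<subseteq> U}"
      unfolding cosub_def by blast
    have "\<sigma> -` U' \<inter> topspace K = {k \<in> topspace K. \<sigma> k ` C \<subseteq> U}"
      using assms(1) CU(3) by auto
    then show "openin K (\<sigma> -` U' \<inter> topspace K)" using assms(2)[OF CU(1,2)] by simp
  qed
qed

lemma compact_open_sub_open:
  assumes "compactin S C" "openin Z U"
  shows "openin (compact_open S Z) {g \<in> topspace (compact_open S Z). g ` C \<subseteq> U}"
proof -
  have "openin (topology_generated_by (cosub S Z)) {g \<in> extensional (topspace S). g ` C \<subseteq> U}"
    by (rule topology_generated_by_Basis) (use assms in \<open>auto simp: cosub_def\<close>)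
  then have "openin (compact_open S Z)
      ({g \<in> extensional (topspace S). continuous_map S Z g} \<inter> {g \<in> extensional (topspace S). g ` C \<subseteq> U})"
    unfolding compact_open_alt by (rule openin_subtopology_Int2)
  moreover have "{g \<in> extensional (topspace S). continuous_map S Z g} \<inter> {g \<in> extensional (topspace S). g ` C \<subseteq> U}
      = {g \<in> topspace (compact_open S Z). g ` C \<subseteq> U}"
    by (auto simp: topspace_compact_open)
  ultimately show ?thesis by simp
qed

lemma cont_from_compact_open:
  assumes "continuous_map K (compact_open S Z) \<sigma>" "compactin S C" "openin Z U"
  shows "openin K {k \<in> topspace K. \<sigma> k ` C \<subseteq> U}"
proof -
  have "openin K {k \<in> topspace K. \<sigma> k \<in> {g \<in> topspace (compact_open S Z). g ` C \<subseteq> U}}"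
    by (rule openin_continuous_map_preimage[OF assms(1) compact_open_sub_open[OF assms(2,3)]])
  moreover have "{k \<in> topspace K. \<sigma> k \<in> {g \<in> topspace (compact_open S Z). g ` C \<subseteq> U}}
     = {k \<in> topspace K. \<sigma> k ` C \<subseteq> U}"
    using assms(1) by (auto simp: continuous_map_def)
  ultimately show ?thesis by simp
qed

lemma postcomp_cont:
  assumes f: "continuous_map Z Z' f"
  shows "continuous_map (compact_open S Z) (compact_open S Z') (postcomp S f)"
proof (rule cont_into_compact_open)
  fix g assume "g \<in> topspace (compact_open S Z)"
  then have g: "continuous_map S Z g" by (simp add: topspace_compact_open)
  have "continuous_map S Z' (f \<circ> g)" by (rule continuous_map_compose[OF g f])
  then have "continuous_map S Z' (postcomp S f g)"
    by (rule continuous_map_eq) (simp add: postcomp_def)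
  then show "postcomp S f g \<in> extensional (topspace S) \<and> continuous_map S Z' (postcomp S f g)"
    by (simp add: postcomp_def)
next
  fix C U assume CU: "compactin S C" "openin Z' U"
  have Csub: "C \<subseteq> topspace S" by (rule compactin_subset_topspace[OF CU(1)])
  have "openin (compact_open S Z) {g \<in> topspace (compact_open S Z). g ` C \<subseteq> {z \<in> topspace Z. f z \<in> U}}"
    by (rule compact_open_sub_open[OF CU(1) openin_continuous_map_preimage[OF f CU(2)]])
  moreover have "{g \<in> topspace (compact_open S Z). g ` C \<subseteq> {z \<in> topspace Z. f z \<in> U}}
      = {g \<in> topspace (compact_open S Z). postcomp S f g ` C \<subseteq> U}"
  proof (intro Collect_cong conj_cong refl)
    fix g assume "g \<in> topspace (compact_open S Z)"
    then have g: "continuous_map S Z g" by (simp add: topspace_compact_open)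
    have gS: "g x \<in> topspace Z" if "x \<in> topspace S" for x
      using g that by (rule continuous_map_image_subset_topspace[THEN subsetD, OF _ imageI])
    show "(g ` C \<subseteq> {z \<in> topspace Z. f z \<in> U}) = (postcomp S f g ` C \<subseteq> U)"
    proof
      assume "g ` C \<subseteq> {z \<in> topspace Z. f z \<in> U}"
      then show "postcomp S f g ` C \<subseteq> U" using Csub by (auto simp: postcomp_def)
    next
      assume "postcomp S f g ` C \<subseteq> U"
      then show "g ` C \<subseteq> {z \<in> topspace Z. f z \<in> U}" using Csub gS by (auto simp: postcomp_def)
    qed
  qed
  ultimately show "openin (compact_open S Z) {g \<in> topspace (compact_open S Z). postcomp S f g ` C \<subseteq> U}"
    by simp
qed

lemma simplex_compact_space: "compact_space (simplex_top n)"
  unfolding simplex_top_def by (rule compact_space_subtopology[OF compactin_standard_simplex])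

lemma simplex_Hausdorff: "Hausdorff_space (simplex_top n)"
  unfolding simplex_top_def
  by (intro Hausdorff_space_subtopology) (simp add: Hausdorff_space_product_topology)

lemma simplex_regular: "regular_space (simplex_top n)"
  by (rule compact_Hausdorff_imp_regular_space[OF simplex_compact_space simplex_Hausdorff])

lemma uncurry_cont:
  assumes \<sigma>: "continuous_map K (compact_open (simplex_top n) Z) \<sigma>"
  shows "continuous_map (prod_topology K (simplex_top n)) Z (\<lambda>(k,s). \<sigma> k s)"
  unfolding continuous_map_def
proof (intro conjI allI impI)
  let ?S = "simplex_top n"
  have \<sigma>k: "continuous_map ?S Z (\<sigma> k)" if "k \<in> topspace K" for k
    using \<sigma> that by (auto simp: continuous_map_def topspace_compact_open)
  show "(\<lambda>(k,s). \<sigma> k s) \<in> topspace (prod_topology K ?S) \<rightarrow> topspace Z"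
    using \<sigma>k by (auto simp: continuous_map_def)
  fix U assume U: "openin Z U"
  show "openin (prod_topology K ?S) {x \<in> topspace (prod_topology K ?S). (\<lambda>(k,s). \<sigma> k s) x \<in> U}"
  proof (subst openin_subopen, intro ballI)
    fix x assume x: "x \<in> {x \<in> topspace (prod_topology K ?S). (\<lambda>(k,s). \<sigma> k s) x \<in> U}"
    obtain k0 s0 where x0: "x = (k0, s0)" "k0 \<in> topspace K" "s0 \<in> topspace ?S" "\<sigma> k0 s0 \<in> U"
      using x by auto
    have W0: "openin ?S {s \<in> topspace ?S. \<sigma> k0 s \<in> U}"
      by (rule openin_continuous_map_preimage[OF \<sigma>k[OF x0(2)] U])
    have "neighbourhood_base_of (closedin ?S) ?S"
      using simplex_regular neighbourhood_base_of_closedin by blast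
    moreover have "s0 \<in> {s \<in> topspace ?S. \<sigma> k0 s \<in> U}" using x0 by simp
    ultimately have "\<exists>V C. openin ?S V \<and> closedin ?S C \<and> s0 \<in> V \<and> V \<subseteq> C \<and>
        C \<subseteq> {s \<in> topspace ?S. \<sigma> k0 s \<in> U}"
      unfolding neighbourhood_base_of using W0 by blast
    then obtain V C where VC: "openin ?S V" "closedin ?S C" "s0 \<in> V" "V \<subseteq> C"
        "C \<subseteq> {s \<in> topspace ?S. \<sigma> k0 s \<in> U}"
      by blast
    have Cc: "compactin ?S C" by (rule closedin_compact_space[OF simplex_compact_space VC(2)])
    define N where "N = {k \<in> topspace K. \<sigma> k ` C \<subseteq> U}"
    have N: "openin K N" unfolding N_def by (rule cont_from_compact_open[OF \<sigma> Cc U])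
    have "k0 \<in> N" using VC(5) x0(2) by (auto simp: N_def)
    show "\<exists>T. openin (prod_topology K ?S) T \<and> x \<in> T \<and>
        T \<subseteq> {x \<in> topspace (prod_topology K ?S). (\<lambda>(k,s). \<sigma> k s) x \<in> U}"
    proof (intro exI conjI)
      show "openin (prod_topology K ?S) (N \<times> V)" using N VC(1) by (simp add: openin_prod_Times_iff)
      show "x \<in> N \<times> V" using \<open>k0 \<in> N\<close> VC(3) x0(1) by simp
      show "N \<times> V \<subseteq> {x \<in> topspace (prod_topology K ?S). (\<lambda>(k,s). \<sigma> k s) x \<in> U}"
        using openin_subset[OF N] openin_subset[OF VC(1)] VC(4) by (auto simp: N_def)
    qed
  qed
qed

lemma tube_lemma_right:
  assumes W: "openin (prod_topology X Y) W" and C: "compactin Y C"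
    and x: "x \<in> topspace X" and subW: "{x} \<times> C \<subseteq> W"
  shows "\<exists>U V. openin X U \<and> openin Y V \<and> x \<in> U \<and> C \<subseteq> V \<and> U \<times> V \<subseteq> W"
proof (cases "C = {}")
  case True
  with x show ?thesis by (intro exI[of _ "topspace X"] exI[of _ "{}"]) auto
next
  case False
  have "\<exists>U V. openin X U \<and> openin Y V \<and> x \<in> U \<and> y \<in> V \<and> U \<times> V \<subseteq> W"
    if "y \<in> C" for y
    using W openin_prod_topology_alt subW subsetD that by fastforce
  then obtain U V where UV: "\<And>y. y \<in> C \<Longrightarrow> openin X (U y) \<and> openin Y (V y) \<and> x \<in> U y \<and> y \<in> V y \<and> U y \<times> V y \<subseteq> W"
    by metis
  then obtain D where D: "finite D" "D \<subseteq> C" "C \<subseteq> \<Union> (V ` D)"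
    using compactinD [OF C, of "V`C"]
    by (smt (verit) UN_I finite_subset_image imageE subsetI)
  show ?thesis
  proof (intro exI conjI)
    show "openin X (\<Inter> (U ` D))" "openin Y (\<Union> (V ` D))"
      using D False UV by blast+
    show "x \<in> \<Inter> (U ` D)" "C \<subseteq> \<Union> (V ` D)" "\<Inter>(U ` D) \<times> \<Union>(V ` D) \<subseteq> W"
      using D UV by force+
  qed
qed

lemma curry_cont:
  assumes H: "continuous_map (prod_topology K S) Z H"
    and \<sigma>: "\<And>k. k \<in> topspace K \<Longrightarrow> \<sigma> k \<in> extensional (topspace S)"
    and \<sigma>H: "\<And>k s. k \<in> topspace K \<Longrightarrow> s \<in> topspace S \<Longrightarrow> \<sigma> k s = H (k, s)"
  shows "continuous_map K (compact_open S Z) \<sigma>"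
proof (rule cont_into_compact_open)
  fix k assume k: "k \<in> topspace K"
  have "continuous_map S Z (H \<circ> Pair k)" by (rule continuous_map_o_Pair[OF H k])
  then have "continuous_map S Z (\<sigma> k)" by (rule continuous_map_eq) (simp add: \<sigma>H[OF k])
  then show "\<sigma> k \<in> extensional (topspace S) \<and> continuous_map S Z (\<sigma> k)" using \<sigma>[OF k] by simp
next
  fix C U assume C: "compactin S C" and U: "openin Z U"
  have Csub: "C \<subseteq> topspace S" by (rule compactin_subset_topspace[OF C])
  define W where "W = {x \<in> topspace (prod_topology K S). H x \<in> U}"
  have W: "openin (prod_topology K S) W" unfolding W_def by (rule openin_continuous_map_preimage[OF H U])
  show "openin K {k \<in> topspace K. \<sigma> k ` C \<subseteq> U}"
  proof (subst openin_subopen, intro ballI)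
    fix k0 assume k0: "k0 \<in> {k \<in> topspace K. \<sigma> k ` C \<subseteq> U}"
    have "{k0} \<times> C \<subseteq> W"
    proof
      fix x assume "x \<in> {k0} \<times> C"
      then obtain b where x: "x = (k0, b)" "b \<in> C" by blast
      have k0K: "k0 \<in> topspace K" and sub: "\<sigma> k0 ` C \<subseteq> U" using k0 by auto
      have bS: "b \<in> topspace S" by (rule subsetD[OF Csub x(2)])
      have "\<sigma> k0 b \<in> U" by (rule subsetD[OF sub imageI[OF x(2)]])
      moreover have "\<sigma> k0 b = H (k0, b)" by (rule \<sigma>H[OF k0K bS])
      ultimately show "x \<in> W" unfolding W_def x using k0K bS by simp
    qed
    moreover have "k0 \<in> topspace K" using k0 by simp
    ultimately have "\<exists>U V. openin K U \<and> openin S V \<and> k0 \<in> U \<and> C \<subseteq> V \<and> U \<times> V \<subseteq> W"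
      using tube_lemma_right[OF W C] by blast
    then obtain U' V where UV: "openin K U'" "openin S V" "k0 \<in> U'" "C \<subseteq> V" "U' \<times> V \<subseteq> W"
      by blast
    show "\<exists>T. openin K T \<and> k0 \<in> T \<and> T \<subseteq> {k \<in> topspace K. \<sigma> k ` C \<subseteq> U}"
    proof (intro exI conjI)
      show "openin K U'" "k0 \<in> U'" by (fact UV)+
      show "U' \<subseteq> {k \<in> topspace K. \<sigma> k ` C \<subseteq> U}"
      proof
        fix k assume k: "k \<in> U'"
        have kK: "k \<in> topspace K" using openin_subset[OF UV(1)] k by blast
        have "\<sigma> k s \<in> U" if "s \<in> C" for s
        proof -
          have "(k, s) \<in> W" using UV(4,5) k that by blast
          then show ?thesis using \<sigma>H[OF kK] Csub that by (auto simp: W_def)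
        qed
        then show "k \<in> {k \<in> topspace K. \<sigma> k ` C \<subseteq> U}" using kK by auto
      qed
    qed
  qed
qed


lemma retract_dgen:
  assumes r: "continuous_map Kp (simplex_top M) r"
    and e: "continuous_map (simplex_top M) Kp e"
    and er: "\<And>x. x \<in> topspace Kp \<Longrightarrow> e (r x) = x"
    and H: "continuous_map Kp Z H"
  shows "continuous_map Kp (dgen Z) H"
  unfolding continuous_map_def
proof (intro conjI allI impI)
  show "H \<in> topspace Kp \<rightarrow> topspace (dgen Z)" using H by (auto simp: continuous_map_def)
  fix V assume V: "openin (dgen Z) V"
  have He: "continuous_map (simplex_top M) Z (H \<circ> e)" by (rule continuous_map_compose[OF e H])
  have O: "openin (simplex_top M) {t \<in> topspace (simplex_top M). (H \<circ> e) t \<in> V}"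
    using V He unfolding openin_dgen by blast
  have "openin Kp {x \<in> topspace Kp. r x \<in> {t \<in> topspace (simplex_top M). (H \<circ> e) t \<in> V}}"
    by (rule openin_continuous_map_preimage[OF r O])
  moreover have "{x \<in> topspace Kp. r x \<in> {t \<in> topspace (simplex_top M). (H \<circ> e) t \<in> V}}
     = {x \<in> topspace Kp. H x \<in> V}"
  proof (intro Collect_cong conj_cong refl)
    fix x assume x: "x \<in> topspace Kp"
    have "r x \<in> topspace (simplex_top M)"
      using r x by (rule continuous_map_image_subset_topspace[THEN subsetD, OF _ imageI])
    then show "(r x \<in> {t \<in> topspace (simplex_top M). (H \<circ> e) t \<in> V}) = (H x \<in> V)"
      using er[OF x] by simp
  qed
  ultimately show "openin Kp {x \<in> topspace Kp. H x \<in> V}" by simp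
qed

lemma sum_grid:
  fixes f :: "nat \<Rightarrow> 'a::comm_monoid_add"
  shows "(\<Sum>m<N * q. f m) = (\<Sum>i<N. \<Sum>j<q. f (i * q + j))"
proof -
  have "(\<Sum>m<N * q. f m) = (\<Sum>i<N. sum f {i * q..<i * q + q})"
    using sum.nat_group[of f q N] by simp
  also have "\<dots> = (\<Sum>i<N. \<Sum>j<q. f (i * q + j))"
  proof (rule sum.cong[OF refl])
    fix i
    have "sum f {0 + i * q..<q + i * q} = (\<Sum>j = 0..<q. f (j + i * q))"
      by (rule sum.shift_bounds_nat_ivl)
    then show "sum f {i * q..<i * q + q} = (\<Sum>j<q. f (i * q + j))"
      by (simp add: add.commute atLeast0LessThan)
  qed
  finally show ?thesis .
qed

definition cpl :: "nat \<Rightarrow> (nat \<Rightarrow> real) \<times> (nat \<Rightarrow> real) \<Rightarrow> (nat \<Rightarrow> real)" where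
  "cpl n x = (\<lambda>m. fst x (m div Suc n) * snd x (m mod Suc n))"

definition marg :: "nat \<Rightarrow> nat \<Rightarrow> (nat \<Rightarrow> real) \<Rightarrow> (nat \<Rightarrow> real) \<times> (nat \<Rightarrow> real)" where
  "marg N n t = ((\<lambda>i. if i \<le> N then \<Sum>j\<le>n. t (i * Suc n + j) else 0),
                 (\<lambda>j. if j \<le> n then \<Sum>i\<le>N. t (i * Suc n + j) else 0))"

lemma atMost_as_lessThan: "{..k} = {..<Suc k}" by auto

lemma sum_simplex_grid:
  "(\<Sum>i\<le>N. \<Sum>j\<le>n. t (i * Suc n + j)) = (\<Sum>m<Suc N * Suc n. t m)"
  unfolding atMost_as_lessThan by (rule sum_grid[symmetric])

lemma div_mod_grid:
  assumes "j \<le> n" shows "(i * Suc n + j) div Suc n = i \<and> (i * Suc n + j) mod Suc n = j"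
proof
  have "(i * Suc n + j) div Suc n = (j + i * Suc n) div Suc n" by (simp only: add.commute)
  also have "\<dots> = i + j div Suc n" by (rule div_mult_self1) simp
  finally show "(i * Suc n + j) div Suc n = i" using assms by simp
  have "(i * Suc n + j) mod Suc n = (j + i * Suc n) mod Suc n" by (simp only: add.commute)
  also have "\<dots> = j mod Suc n" by (rule mod_mult_self1)
  finally show "(i * Suc n + j) mod Suc n = j" using assms by simp
qed

lemma cpl_grid: "j \<le> n \<Longrightarrow> cpl n (a, b) (i * Suc n + j) = a i * b j"
  unfolding cpl_def fst_conv snd_conv using div_mod_grid[of j n i] by (simp only:)

lemma cpl_simplex:
  assumes a: "a \<in> standard_simplex N" and b: "b \<in> standard_simplex n"
  shows "cpl n (a, b) \<in> standard_simplex (Suc N * Suc n - 1)"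
proof -
  have a01: "0 \<le> a i \<and> a i \<le> 1" for i using a by (simp add: standard_simplex_def)
  have b01: "0 \<le> b i \<and> b i \<le> 1" for i using b by (simp add: standard_simplex_def)
  have nn: "0 \<le> cpl n (a,b) m \<and> cpl n (a,b) m \<le> 1" for m
    using a01 b01 by (simp add: cpl_def mult_le_one)
  have z: "cpl n (a,b) m = 0" if "Suc N * Suc n - 1 < m" for m
  proof -
    have "Suc N * Suc n \<le> m" using that by simp
    then have "Suc N \<le> m div Suc n"
      by (metis div_le_mono nonzero_mult_div_cancel_right Zero_not_Suc)
    then have "a (m div Suc n) = 0" using a by (simp add: standard_simplex_def)
    then show ?thesis by (simp add: cpl_def)
  qed
  have "(\<Sum>m\<le>Suc N * Suc n - 1. cpl n (a,b) m) = (\<Sum>m<Suc N * Suc n. cpl n (a,b) m)"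
    by (rule sum.cong) auto
  also have "\<dots> = (\<Sum>i\<le>N. \<Sum>j\<le>n. cpl n (a,b) (i * Suc n + j))"
    by (rule sum_simplex_grid[symmetric])
  also have "\<dots> = (\<Sum>i\<le>N. \<Sum>j\<le>n. a i * b j)"
    by (intro sum.cong refl) (rule cpl_grid; simp)
  also have "\<dots> = (\<Sum>i\<le>N. a i) * (\<Sum>j\<le>n. b j)"
    by (simp add: sum_product)
  also have "\<dots> = 1" using a b by (simp add: standard_simplex_def)
  finally show ?thesis using nn z by (simp add: standard_simplex_def)
qed

lemma marg_cpl:
  assumes a: "a \<in> standard_simplex N" and b: "b \<in> standard_simplex n"
  shows "marg N n (cpl n (a, b)) = (a, b)"
proof -
  have "(\<lambda>i. if i \<le> N then \<Sum>j\<le>n. cpl n (a,b) (i * Suc n + j) else 0) = a"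
  proof
    fix i show "(if i \<le> N then \<Sum>j\<le>n. cpl n (a,b) (i * Suc n + j) else 0) = a i"
    proof (cases "i \<le> N")
      case True
      have "(\<Sum>j\<le>n. cpl n (a,b) (i * Suc n + j)) = (\<Sum>j\<le>n. a i * b j)"
        by (intro sum.cong refl) (rule cpl_grid; simp)
      also have "\<dots> = a i" using b by (simp add: standard_simplex_def flip: sum_distrib_left)
      finally show ?thesis using True by simp
    next
      case False then show ?thesis using a by (simp add: standard_simplex_def)
    qed
  qed
  moreover have "(\<lambda>j. if j \<le> n then \<Sum>i\<le>N. cpl n (a,b) (i * Suc n + j) else 0) = b"
  proof
    fix j show "(if j \<le> n then \<Sum>i\<le>N. cpl n (a,b) (i * Suc n + j) else 0) = b j"
    proof (cases "j \<le> n")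
      case True
      have "(\<Sum>i\<le>N. cpl n (a,b) (i * Suc n + j)) = (\<Sum>i\<le>N. a i * b j)"
        by (intro sum.cong refl) (rule cpl_grid; use True in simp)
      also have "\<dots> = b j" using a by (simp add: standard_simplex_def flip: sum_distrib_right)
      finally show ?thesis using True by simp
    next
      case False then show ?thesis using b by (simp add: standard_simplex_def)
    qed
  qed
  ultimately show ?thesis by (simp add: marg_def)
qed

lemma marg_simplex:
  assumes t: "t \<in> standard_simplex (Suc N * Suc n - 1)"
  shows "fst (marg N n t) \<in> standard_simplex N" "snd (marg N n t) \<in> standard_simplex n"
proof -
  have tnn: "0 \<le> t m" for m using t by (simp add: standard_simplex_def)
  have tot: "(\<Sum>i\<le>N. \<Sum>j\<le>n. t (i * Suc n + j)) = 1"
  proof -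
    have "(\<Sum>i\<le>N. \<Sum>j\<le>n. t (i * Suc n + j)) = (\<Sum>m<Suc N * Suc n. t m)"
      by (rule sum_simplex_grid)
    also have "\<dots> = (\<Sum>m\<le>Suc N * Suc n - 1. t m)" by (rule sum.cong) auto
    also have "\<dots> = 1" using t by (simp add: standard_simplex_def)
    finally show ?thesis .
  qed
  have "(\<Sum>j\<le>n. \<Sum>i\<le>N. t (i * Suc n + j)) = (\<Sum>i\<le>N. \<Sum>j\<le>n. t (i * Suc n + j))"
    by (rule sum.swap)
  then have tot2: "(\<Sum>j\<le>n. \<Sum>i\<le>N. t (i * Suc n + j)) = 1" using tot by simp
  have le1: "(\<Sum>j\<le>n. t (i * Suc n + j)) \<le> 1" if "i \<le> N" for i
  proof -
    have "(\<Sum>j\<le>n. t (i * Suc n + j)) \<le> (\<Sum>i\<le>N. \<Sum>j\<le>n. t (i * Suc n + j))"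
      by (rule member_le_sum) (use that tnn in \<open>auto intro: sum_nonneg\<close>)
    then show ?thesis using tot by simp
  qed
  have le2: "(\<Sum>i\<le>N. t (i * Suc n + j)) \<le> 1" if "j \<le> n" for j
  proof -
    have "(\<Sum>i\<le>N. t (i * Suc n + j)) \<le> (\<Sum>j\<le>n. \<Sum>i\<le>N. t (i * Suc n + j))"
      by (rule member_le_sum[where f = "\<lambda>j. \<Sum>i\<le>N. t (i * Suc n + j)"]) (use that tnn in \<open>auto intro: sum_nonneg\<close>)
    then show ?thesis using tot2 by simp
  qed
  have s1: "(\<Sum>i\<le>N. fst (marg N n t) i) = 1"
    using tot by (simp add: marg_def)
  have s2: "(\<Sum>j\<le>n. snd (marg N n t) j) = 1"
    using tot2 by (simp add: marg_def)
  show "fst (marg N n t) \<in> standard_simplex N"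
    unfolding standard_simplex_def
  proof (intro CollectI conjI allI impI)
    fix i
    show "0 \<le> fst (marg N n t) i" by (simp add: marg_def sum_nonneg tnn)
    show "fst (marg N n t) i \<le> 1" using le1[of i] by (simp add: marg_def)
    show "fst (marg N n t) i = 0" if "N < i" using that by (simp add: marg_def)
  qed (rule s1)
  show "snd (marg N n t) \<in> standard_simplex n"
    unfolding standard_simplex_def
  proof (intro CollectI conjI allI impI)
    fix j
    show "0 \<le> snd (marg N n t) j" by (simp add: marg_def sum_nonneg tnn)
    show "snd (marg N n t) j \<le> 1" using le2[of j] by (simp add: marg_def)
    show "snd (marg N n t) j = 0" if "n < j" using that by (simp add: marg_def)
  qed (rule s2)
qed

lemma cpl_cont:
  "continuous_map (prod_topology (simplex_top N) (simplex_top n)) (simplex_top (Suc N * Suc n - 1)) (cpl n)"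
proof -
  have c1: "continuous_map (prod_topology (simplex_top N) (simplex_top n)) euclideanreal (\<lambda>x. fst x i)" for i
    using continuous_map_compose[OF continuous_map_fst coord_cont[of N i]] by (simp add: o_def)
  have c2: "continuous_map (prod_topology (simplex_top N) (simplex_top n)) euclideanreal (\<lambda>x. snd x i)" for i
    using continuous_map_compose[OF continuous_map_snd coord_cont[of n i]] by (simp add: o_def)
  have "continuous_map (prod_topology (simplex_top N) (simplex_top n)) (powertop_real UNIV) (cpl n)"
    unfolding continuous_map_componentwise_UNIV cpl_def
    by (intro allI continuous_map_real_mult c1 c2)
  moreover have "cpl n \<in> topspace (prod_topology (simplex_top N) (simplex_top n)) \<rightarrow> standard_simplex (Suc N * Suc n - 1)"
    using cpl_simplex by auto
  ultimately show ?thesis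
    by (simp add: simplex_top_def continuous_map_in_subtopology)
qed

lemma marg_cont:
  "continuous_map (simplex_top (Suc N * Suc n - 1)) (prod_topology (simplex_top N) (simplex_top n)) (marg N n)"
  unfolding continuous_map_pairwise
proof
  let ?M = "Suc N * Suc n - 1"
  have "continuous_map (simplex_top ?M) (powertop_real UNIV) (fst \<circ> marg N n)"
    unfolding continuous_map_componentwise_UNIV
  proof
    fix i
    show "continuous_map (simplex_top ?M) euclideanreal (\<lambda>x. (fst \<circ> marg N n) x i)"
    proof (cases "i \<le> N")
      case True
      then show ?thesis by (simp add: marg_def o_def) (intro continuous_map_sum coord_cont finite_atMost)
    qed (simp add: marg_def o_def)
  qed
  then show "continuous_map (simplex_top ?M) (simplex_top N) (fst \<circ> marg N n)"
    using marg_simplex(1) by (auto simp: simplex_top_def continuous_map_in_subtopology)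
  have "continuous_map (simplex_top ?M) (powertop_real UNIV) (snd \<circ> marg N n)"
    unfolding continuous_map_componentwise_UNIV
  proof
    fix j
    show "continuous_map (simplex_top ?M) euclideanreal (\<lambda>x. (snd \<circ> marg N n) x j)"
    proof (cases "j \<le> n")
      case True
      then show ?thesis by (simp add: marg_def o_def) (intro continuous_map_sum coord_cont finite_atMost)
    qed (simp add: marg_def o_def)
  qed
  then show "continuous_map (simplex_top ?M) (simplex_top n) (snd \<circ> marg N n)"
    using marg_simplex(2) by (auto simp: simplex_top_def continuous_map_in_subtopology)
qed

lemma prod_simplex_dgen:
  assumes "continuous_map (prod_topology (simplex_top N) (simplex_top n)) Z H"
  shows "continuous_map (prod_topology (simplex_top N) (simplex_top n)) (dgen Z) H"
proof (rule retract_dgen[OF cpl_cont marg_cont _ assms])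
  fix x assume "x \<in> topspace (prod_topology (simplex_top N) (simplex_top n))"
  then obtain a b where "x = (a, b)" "a \<in> standard_simplex N" "b \<in> standard_simplex n" by auto
  then show "marg N n (cpl n x) = x" using marg_cpl by simp
qed


lemma dgen_homeo:
  assumes D1: "\<And>N \<sigma>. continuous_map (simplex_top N) A \<sigma> \<Longrightarrow> continuous_map (simplex_top N) B (\<Phi> \<circ> \<sigma>)"
    and D2: "\<And>N \<sigma>. continuous_map (simplex_top N) B \<sigma> \<Longrightarrow> continuous_map (simplex_top N) A (\<Psi> \<circ> \<sigma>)"
    and inv1: "\<And>x. x \<in> topspace A \<Longrightarrow> \<Psi> (\<Phi> x) = x"
    and inv2: "\<And>y. y \<in> topspace B \<Longrightarrow> \<Phi> (\<Psi> y) = y"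
  shows "homeomorphic_maps (dgen A) (dgen B) \<Phi> \<Psi>"
proof -
  obtain s0 where s0: "s0 \<in> topspace (simplex_top 0)"
    using nonempty_standard_simplex by (auto simp: simplex_top_def)
  have T1: "\<Phi> x \<in> topspace B" if "x \<in> topspace A" for x
  proof -
    have "continuous_map (simplex_top 0) A (\<lambda>_. x)" using that by simp
    then have "continuous_map (simplex_top 0) B (\<Phi> \<circ> (\<lambda>_. x))" by (rule D1)
    then have "(\<Phi> \<circ> (\<lambda>_. x)) s0 \<in> topspace B"
      using s0 by (rule continuous_map_image_subset_topspace[THEN subsetD, OF _ imageI])
    then show ?thesis by simp
  qed
  have T2: "\<Psi> x \<in> topspace A" if "x \<in> topspace B" for x
  proof -
    have "continuous_map (simplex_top 0) B (\<lambda>_. x)" using that by simp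
    then have "continuous_map (simplex_top 0) A (\<Psi> \<circ> (\<lambda>_. x))" by (rule D2)
    then have "(\<Psi> \<circ> (\<lambda>_. x)) s0 \<in> topspace A"
      using s0 by (rule continuous_map_image_subset_topspace[THEN subsetD, OF _ imageI])
    then show ?thesis by simp
  qed
  show ?thesis
    unfolding homeomorphic_maps_def
    using dgen_cont[of A \<Phi> B, OF T1 D1] dgen_cont[of B \<Psi> A, OF T2 D2] inv1 inv2 by simp
qed

lemma topspace_map_space:
  "topspace (map_space A \<phi>A X \<phi>X) =
     {g \<in> extensional (topspace A). continuous_map A X g \<and> (\<forall>s\<in>topspace A. \<phi>X (g s) = \<phi>A s)}"
  by (auto simp: map_space_def topspace_compact_open)

lemma topspace_pullback:
  "topspace (pullback_top T \<phi> S \<psi>) = {(x, y). x \<in> topspace T \<and> y \<in> topspace S \<and> \<phi> x = \<psi> y}"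
  by (auto simp: pullback_top_def)

lemma cont_dgen_fst:
  "continuous_map (pullback_top T \<phi> S \<psi>) T fst"
  unfolding pullback_top_def
  using continuous_map_compose[OF continuous_map_dgen_id continuous_map_from_subtopology[OF continuous_map_fst]]
  by (simp add: o_def)

lemma cont_into_sub_co:
  "continuous_map K (subtopology (compact_open S Z) F) \<sigma> \<longleftrightarrow>
     continuous_map K (compact_open S Z) \<sigma> \<and> (\<forall>k\<in>topspace K. \<sigma> k \<in> F)"
  by (auto simp: continuous_map_in_subtopology)

lemma cont_into_pullback_from_prod:
  assumes "continuous_map (prod_topology (simplex_top N) (simplex_top n)) T (\<lambda>x. fst (H x))"
    and "continuous_map (prod_topology (simplex_top N) (simplex_top n)) S (\<lambda>x. snd (H x))"
    and "\<And>x. x \<in> topspace (prod_topology (simplex_top N) (simplex_top n)) \<Longrightarrow> \<phi> (fst (H x)) = \<psi> (snd (H x))"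
  shows "continuous_map (prod_topology (simplex_top N) (simplex_top n)) (pullback_top T \<phi> S \<psi>) H"
  unfolding pullback_top_def
proof (rule prod_simplex_dgen)
  have "continuous_map (prod_topology (simplex_top N) (simplex_top n)) (prod_topology T S) H"
    using assms(1,2) by (simp add: continuous_map_pairwise o_def)
  moreover have "H x \<in> {(x, y). x \<in> topspace T \<and> y \<in> topspace S \<and> \<phi> x = \<psi> y}"
    if "x \<in> topspace (prod_topology (simplex_top N) (simplex_top n))" for x
  proof -
    have "fst (H x) \<in> topspace T" using assms(1) that by (auto simp: continuous_map_def)
    moreover have "snd (H x) \<in> topspace S" using assms(2) that by (auto simp: continuous_map_def)
    ultimately show ?thesis using assms(3)[OF that] by (cases "H x") auto
  qed
  ultimately show "continuous_map (prod_topology (simplex_top N) (simplex_top n))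
     (subtopology (prod_topology T S) {(x, y). x \<in> topspace T \<and> y \<in> topspace S \<and> \<phi> x = \<psi> y}) H"
    by (auto simp: continuous_map_in_subtopology)
qed


lemma CP_CN_homeo:
  assumes c: "nd_simplex P n c" and \<phi>X: "\<phi>X \<in> topspace X \<rightarrow> P"
  shows "homeomorphic_maps (CP n c X \<phi>X) (CN P n c X \<phi>X)
           (\<lambda>\<gamma>. restrict (\<lambda>s. (\<gamma> s, push c n s)) (standard_simplex n))
           (postcomp (simplex_top n) fst)"
  unfolding CP_def CN_def map_space_def
proof (rule dgen_homeo)
  let ?S = "simplex_top n"
  let ?Z = "pullback_top X \<phi>X (nerve_top P) nerve_strat"
  let ?F1 = "{g. \<forall>s\<in>topspace ?S. \<phi>X (g s) = nerve_strat (push c n s)}"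
  let ?F2 = "{g. \<forall>s\<in>topspace ?S. snd (g s) = push c n s}"
  let ?A = "\<lambda>\<gamma>. restrict (\<lambda>s. (\<gamma> s, push c n s)) (standard_simplex n)"
  fix N \<sigma>
  {
    assume \<sigma>: "continuous_map (simplex_top N) (subtopology (compact_open ?S X) ?F1) \<sigma>"
    then have \<sigma>co: "continuous_map (simplex_top N) (compact_open ?S X) \<sigma>"
      and \<sigma>F: "\<And>k. k \<in> topspace (simplex_top N) \<Longrightarrow> \<sigma> k \<in> ?F1"
      by (auto simp: cont_into_sub_co)
    have H0: "continuous_map (prod_topology (simplex_top N) ?S) X (\<lambda>(k,s). \<sigma> k s)"
      by (rule uncurry_cont[OF \<sigma>co])
    have H: "continuous_map (prod_topology (simplex_top N) ?S) ?Z (\<lambda>(k,s). (\<sigma> k s, push c n s))"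
    proof (rule cont_into_pullback_from_prod)
      show "continuous_map (prod_topology (simplex_top N) ?S) X (\<lambda>x. fst (case x of (k, s) \<Rightarrow> (\<sigma> k s, push c n s)))"
        using H0 by (simp add: case_prod_unfold)
      show "continuous_map (prod_topology (simplex_top N) ?S) (nerve_top P) (\<lambda>x. snd (case x of (k, s) \<Rightarrow> (\<sigma> k s, push c n s)))"
        using continuous_map_compose[OF continuous_map_snd push_cont_nerve[OF c]]
        by (simp add: case_prod_unfold o_def)
      fix x assume "x \<in> topspace (prod_topology (simplex_top N) ?S)"
      then show "\<phi>X (fst (case x of (k, s) \<Rightarrow> (\<sigma> k s, push c n s))) =
          nerve_strat (snd (case x of (k, s) \<Rightarrow> (\<sigma> k s, push c n s)))"
        using \<sigma>F by auto
    qed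
    have "continuous_map (simplex_top N) (compact_open ?S ?Z) (?A \<circ> \<sigma>)"
      by (rule curry_cont[OF H]) auto
    moreover have "(?A \<circ> \<sigma>) k \<in> ?F2" for k by auto
    ultimately show "continuous_map (simplex_top N) (subtopology (compact_open ?S ?Z) ?F2) (?A \<circ> \<sigma>)"
      by (simp add: cont_into_sub_co)
  }
  {
    assume \<sigma>: "continuous_map (simplex_top N) (subtopology (compact_open ?S ?Z) ?F2) \<sigma>"
    then have \<sigma>co: "continuous_map (simplex_top N) (compact_open ?S ?Z) \<sigma>"
      and \<sigma>F: "\<And>k. k \<in> topspace (simplex_top N) \<Longrightarrow> \<sigma> k \<in> ?F2"
      by (auto simp: cont_into_sub_co)
    have "continuous_map (simplex_top N) (compact_open ?S X) (postcomp ?S fst \<circ> \<sigma>)"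
      by (rule continuous_map_compose[OF \<sigma>co postcomp_cont[OF cont_dgen_fst]])
    moreover have "(postcomp ?S fst \<circ> \<sigma>) k \<in> ?F1" if k: "k \<in> topspace (simplex_top N)" for k
    proof -
      have "\<sigma> k \<in> topspace (compact_open ?S ?Z)" using \<sigma>co k by (auto simp: continuous_map_def)
      then have mem: "\<sigma> k s \<in> topspace ?Z" if "s \<in> topspace ?S" for s
        using that by (auto simp: topspace_compact_open continuous_map_def)
      have pb: "\<phi>X (fst (\<sigma> k s)) = nerve_strat (snd (\<sigma> k s))" if "s \<in> topspace ?S" for s
        using mem[OF that] by (auto simp: topspace_pullback split: prod.splits)
      then show ?thesis using \<sigma>F[OF k] by (auto simp: postcomp_def)
    qed
    ultimately show "continuous_map (simplex_top N) (subtopology (compact_open ?S X) ?F1) (postcomp ?S fst \<circ> \<sigma>)"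
      by (simp add: cont_into_sub_co)
  }
next
  let ?S = "simplex_top n"
  fix x assume "x \<in> topspace (subtopology (compact_open ?S X)
     {g. \<forall>s\<in>topspace ?S. \<phi>X (g s) = nerve_strat (push c n s)})"
  then have "x \<in> extensional (standard_simplex n)" by (simp add: topspace_compact_open)
  then show "postcomp ?S fst (restrict (\<lambda>s. (x s, push c n s)) (standard_simplex n)) = x"
    by (auto simp: postcomp_def extensional_def)
next
  let ?S = "simplex_top n"
  let ?Z = "pullback_top X \<phi>X (nerve_top P) nerve_strat"
  fix y assume y: "y \<in> topspace (subtopology (compact_open ?S ?Z) {g. \<forall>s\<in>topspace ?S. snd (g s) = push c n s})"
  then have "y \<in> extensional (standard_simplex n)" "\<forall>s\<in>standard_simplex n. snd (y s) = push c n s"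
    by (auto simp: topspace_compact_open)
  then show "restrict (\<lambda>s. (postcomp ?S fst y s, push c n s)) (standard_simplex n) = y"
    by (auto simp: postcomp_def extensional_def prod_eq_iff)
qed


lemma ns_alpha:
  assumes c: "nd_simplex P n c" and \<alpha>: "poset_iso P Q \<alpha>" and s: "s \<in> standard_simplex n"
  shows "nerve_strat (push (\<alpha> \<circ> c) n s) = \<alpha> (nerve_strat (push c n s))"
proof -
  have sc: "sinc n c" by (rule nd_sinc[OF c])
  have "sinc n (\<alpha> \<circ> c)"
    by (rule sinc_comp[OF sc, of P \<alpha>]) (use c \<alpha> in \<open>auto simp: nd_simplex_def poset_iso_def bij_betw_def\<close>)
  then show ?thesis using ns_push[OF sc s] ns_push[of n "\<alpha> \<circ> c" s] s by simp
qed

lemma CP_CN_homeo_Y: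
  assumes c: "nd_simplex P n c" and \<alpha>: "poset_iso P Q \<alpha>"
  shows "homeomorphic_maps (CP n (\<alpha> \<circ> c) Y \<phi>Y) (CN P n c (pullback_top Y \<phi>Y (alex P) \<alpha>) snd)
           (\<lambda>\<delta>. restrict (\<lambda>s. ((\<delta> s, nerve_strat (push c n s)), push c n s)) (standard_simplex n))
           (postcomp (simplex_top n) (fst \<circ> fst))"
  unfolding CP_def CN_def map_space_def
proof (rule dgen_homeo)
  let ?S = "simplex_top n"
  let ?X' = "pullback_top Y \<phi>Y (alex P) \<alpha>"
  let ?Z = "pullback_top ?X' snd (nerve_top P) nerve_strat"
  let ?F1 = "{g. \<forall>s\<in>topspace ?S. \<phi>Y (g s) = nerve_strat (push (\<alpha> \<circ> c) n s)}"
  let ?F2 = "{g. \<forall>s\<in>topspace ?S. snd (g s) = push c n s}"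
  let ?B = "\<lambda>\<delta>. restrict (\<lambda>s. ((\<delta> s, nerve_strat (push c n s)), push c n s)) (standard_simplex n)"
  fix N \<sigma>
  {
    assume \<sigma>: "continuous_map (simplex_top N) (subtopology (compact_open ?S Y) ?F1) \<sigma>"
    then have \<sigma>co: "continuous_map (simplex_top N) (compact_open ?S Y) \<sigma>"
      and \<sigma>F: "\<And>k. k \<in> topspace (simplex_top N) \<Longrightarrow> \<sigma> k \<in> ?F1"
      by (auto simp: cont_into_sub_co)
    have H0: "continuous_map (prod_topology (simplex_top N) ?S) Y (\<lambda>(k,s). \<sigma> k s)"
      by (rule uncurry_cont[OF \<sigma>co])
    have nsc: "continuous_map (prod_topology (simplex_top N) ?S) (alex P) (\<lambda>x. nerve_strat (push c n (snd x)))"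
      using continuous_map_compose[OF continuous_map_snd ns_cont[OF c]] by (simp add: o_def)
    have H1: "continuous_map (prod_topology (simplex_top N) ?S) ?X' (\<lambda>(k,s). (\<sigma> k s, nerve_strat (push c n s)))"
    proof (rule cont_into_pullback_from_prod)
      show "continuous_map (prod_topology (simplex_top N) ?S) Y (\<lambda>x. fst (case x of (k, s) \<Rightarrow> (\<sigma> k s, nerve_strat (push c n s))))"
        using H0 by (simp add: case_prod_unfold)
      show "continuous_map (prod_topology (simplex_top N) ?S) (alex P) (\<lambda>x. snd (case x of (k, s) \<Rightarrow> (\<sigma> k s, nerve_strat (push c n s))))"
        using nsc by (simp add: case_prod_unfold)
      fix x assume x: "x \<in> topspace (prod_topology (simplex_top N) ?S)"
      then obtain k s where ks: "x = (k, s)" "k \<in> topspace (simplex_top N)" "s \<in> standard_simplex n" by auto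
      show "\<phi>Y (fst (case x of (k, s) \<Rightarrow> (\<sigma> k s, nerve_strat (push c n s)))) =
          \<alpha> (snd (case x of (k, s) \<Rightarrow> (\<sigma> k s, nerve_strat (push c n s))))"
        using \<sigma>F[OF ks(2)] ks ns_alpha[OF c \<alpha> ks(3)] by auto
    qed
    have H: "continuous_map (prod_topology (simplex_top N) ?S) ?Z
        (\<lambda>(k,s). ((\<sigma> k s, nerve_strat (push c n s)), push c n s))"
    proof (rule cont_into_pullback_from_prod)
      show "continuous_map (prod_topology (simplex_top N) ?S) ?X'
          (\<lambda>x. fst (case x of (k, s) \<Rightarrow> ((\<sigma> k s, nerve_strat (push c n s)), push c n s)))"
        using H1 by (simp add: case_prod_unfold)
      show "continuous_map (prod_topology (simplex_top N) ?S) (nerve_top P)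
          (\<lambda>x. snd (case x of (k, s) \<Rightarrow> ((\<sigma> k s, nerve_strat (push c n s)), push c n s)))"
        using continuous_map_compose[OF continuous_map_snd push_cont_nerve[OF c]]
        by (simp add: case_prod_unfold o_def)
    qed (auto simp: case_prod_unfold)
    have "continuous_map (simplex_top N) (compact_open ?S ?Z) (?B \<circ> \<sigma>)"
      by (rule curry_cont[OF H]) auto
    moreover have "(?B \<circ> \<sigma>) k \<in> ?F2" for k by auto
    ultimately show "continuous_map (simplex_top N) (subtopology (compact_open ?S ?Z) ?F2) (?B \<circ> \<sigma>)"
      by (simp add: cont_into_sub_co)
  }
  {
    assume \<sigma>: "continuous_map (simplex_top N) (subtopology (compact_open ?S ?Z) ?F2) \<sigma>"
    then have \<sigma>co: "continuous_map (simplex_top N) (compact_open ?S ?Z) \<sigma>"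
      and \<sigma>F: "\<And>k. k \<in> topspace (simplex_top N) \<Longrightarrow> \<sigma> k \<in> ?F2"
      by (auto simp: cont_into_sub_co)
    have ff: "continuous_map ?Z Y (fst \<circ> fst)"
      by (rule continuous_map_compose[OF cont_dgen_fst cont_dgen_fst])
    have "continuous_map (simplex_top N) (compact_open ?S Y) (postcomp ?S (fst \<circ> fst) \<circ> \<sigma>)"
      by (rule continuous_map_compose[OF \<sigma>co postcomp_cont[OF ff]])
    moreover have "(postcomp ?S (fst \<circ> fst) \<circ> \<sigma>) k \<in> ?F1" if k: "k \<in> topspace (simplex_top N)" for k
    proof -
      have "\<sigma> k \<in> topspace (compact_open ?S ?Z)" using \<sigma>co k by (auto simp: continuous_map_def)
      then have mem: "\<sigma> k s \<in> topspace ?Z" if "s \<in> topspace ?S" for s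
        using that by (auto simp: topspace_compact_open continuous_map_def)
      have pb: "\<phi>Y (fst (fst (\<sigma> k s))) = \<alpha> (nerve_strat (snd (\<sigma> k s)))" if "s \<in> topspace ?S" for s
        using mem[OF that] by (auto simp: topspace_pullback split: prod.splits)
      have "\<phi>Y (fst (fst (\<sigma> k s))) = nerve_strat (push (\<alpha> \<circ> c) n s)" if s: "s \<in> topspace ?S" for s
        using pb[OF s] \<sigma>F[OF k] s ns_alpha[OF c \<alpha>, of s] by auto
      then show ?thesis by (auto simp: postcomp_def)
    qed
    ultimately show "continuous_map (simplex_top N) (subtopology (compact_open ?S Y) ?F1) (postcomp ?S (fst \<circ> fst) \<circ> \<sigma>)"
      by (simp add: cont_into_sub_co)
  }
next
  let ?S = "simplex_top n"
  fix x assume "x \<in> topspace (subtopology (compact_open ?S Y)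
     {g. \<forall>s\<in>topspace ?S. \<phi>Y (g s) = nerve_strat (push (\<alpha> \<circ> c) n s)})"
  then have "x \<in> extensional (standard_simplex n)" by (simp add: topspace_compact_open)
  then show "postcomp ?S (fst \<circ> fst) (restrict (\<lambda>s. ((x s, nerve_strat (push c n s)), push c n s)) (standard_simplex n)) = x"
    by (auto simp: postcomp_def extensional_def)
next
  let ?S = "simplex_top n"
  let ?X' = "pullback_top Y \<phi>Y (alex P) \<alpha>"
  let ?Z = "pullback_top ?X' snd (nerve_top P) nerve_strat"
  fix y assume y: "y \<in> topspace (subtopology (compact_open ?S ?Z) {g. \<forall>s\<in>topspace ?S. snd (g s) = push c n s})"
  then have ext: "y \<in> extensional (standard_simplex n)" and sn: "\<forall>s\<in>standard_simplex n. snd (y s) = push c n s"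
    and cy: "continuous_map ?S ?Z y"
    by (auto simp: topspace_compact_open)
  have mem: "y s \<in> topspace ?Z" if "s \<in> standard_simplex n" for s
    using cy that by (auto simp: continuous_map_def)
  have "snd (fst (y s)) = nerve_strat (push c n s)" if "s \<in> standard_simplex n" for s
    using mem[OF that] sn that by (auto simp: topspace_pullback split: prod.splits)
  then show "restrict (\<lambda>s. ((postcomp ?S (fst \<circ> fst) y s, nerve_strat (push c n s)), push c n s)) (standard_simplex n) = y"
    using ext sn by (auto simp: postcomp_def extensional_def prod_eq_iff)
qed


lemma bdry_sub: "cube_bdry n \<subseteq> topspace (cube_top n)"
  by (auto simp: cube_bdry_def)

lemma sph_map_comp:
  assumes b: "continuous_map T T' b" and g: "sph_map n T x0 g"
  shows "sph_map n T' (b x0) (b \<circ> g)"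
  using g continuous_map_compose[OF _ b, of "cube_top n" g] unfolding sph_map_def by auto

lemma sph_map_cong:
  assumes g: "sph_map n T x0 g" and eq: "\<And>x. x \<in> topspace (cube_top n) \<Longrightarrow> g x = g' x"
  shows "sph_map n T x0 g'"
proof -
  have "continuous_map (cube_top n) T g'" using g eq continuous_map_eq unfolding sph_map_def by blast
  moreover have "g' ` cube_bdry n = g ` cube_bdry n"
    by (intro image_cong refl) (metis eq bdry_sub subsetD)
  ultimately show ?thesis using g unfolding sph_map_def by simp
qed

lemma rel_homotopic_cong:
  assumes "rel_homotopic n T y g1 g2"
    and "\<And>x. x \<in> topspace (cube_top n) \<Longrightarrow> g1 x = g1' x"
    and "\<And>x. x \<in> topspace (cube_top n) \<Longrightarrow> g2 x = g2' x"
  shows "rel_homotopic n T y g1' g2'"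
proof -
  have "restrict g1 (topspace (cube_top n)) = restrict g1' (topspace (cube_top n))"
    "restrict g2 (topspace (cube_top n)) = restrict g2' (topspace (cube_top n))"
    using assms(2,3) by (auto intro: restrict_ext)
  then show ?thesis using assms(1) unfolding rel_homotopic_def by simp
qed

lemma homotopic_with_cong_cube:
  assumes H: "homotopic_with (\<lambda>h. h ` cube_bdry n \<subseteq> {y}) (cube_top n) T f g"
    and ef: "\<And>x. x \<in> topspace (cube_top n) \<Longrightarrow> f x = f' x"
    and eg: "\<And>x. x \<in> topspace (cube_top n) \<Longrightarrow> g x = g' x"
  shows "homotopic_with (\<lambda>h. h ` cube_bdry n \<subseteq> {y}) (cube_top n) T f' g'"
proof -
  have Pf: "f ` cube_bdry n \<subseteq> {y}" and Pg: "g ` cube_bdry n \<subseteq> {y}"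
    using homotopic_with_imp_property[OF H] by auto
  have cf: "continuous_map (cube_top n) T f" and cg: "continuous_map (cube_top n) T g"
    using homotopic_with_imp_continuous_maps[OF H] by auto
  have "f' ` cube_bdry n = f ` cube_bdry n"
    by (intro image_cong refl) (metis ef bdry_sub subsetD)
  then have Pf': "f' ` cube_bdry n \<subseteq> {y}" using Pf by simp
  have "g' ` cube_bdry n = g ` cube_bdry n"
    by (intro image_cong refl) (metis eg bdry_sub subsetD)
  then have Pg': "g' ` cube_bdry n \<subseteq> {y}" using Pg by simp
  have cf': "continuous_map (cube_top n) T f'" by (rule continuous_map_eq[OF cf ef])
  have h1: "homotopic_with (\<lambda>h. h ` cube_bdry n \<subseteq> {y}) (cube_top n) T f' f"
    by (rule homotopic_with_equal[OF Pf' Pf cf']) (simp add: ef)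
  have h3: "homotopic_with (\<lambda>h. h ` cube_bdry n \<subseteq> {y}) (cube_top n) T g g'"
    by (rule homotopic_with_equal[OF Pg Pg' cg]) (simp add: eg)
  show ?thesis by (rule homotopic_with_trans[OF homotopic_with_trans[OF h1 H] h3])
qed

lemma rel_homotopic_comp:
  assumes b: "continuous_map T T' b" and H: "rel_homotopic n T y g1 g2"
  shows "rel_homotopic n T' (b y) (b \<circ> g1) (b \<circ> g2)"
proof -
  let ?C = "topspace (cube_top n)"
  have "homotopic_with (\<lambda>h. h ` cube_bdry n \<subseteq> {b y}) (cube_top n) T'
      (b \<circ> restrict g1 ?C) (b \<circ> restrict g2 ?C)"
    using H unfolding rel_homotopic_def
    by (rule homotopic_with_compose_continuous_map_left[OF _ b]) fastforce
  then show ?thesis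
    unfolding rel_homotopic_def by (rule homotopic_with_cong_cube) auto
qed

lemma pathin_comp_pc:
  assumes h: "continuous_map T T' h" and p: "path_component_of T x y"
  shows "path_component_of T' (h x) (h y)"
proof -
  obtain g where g: "pathin T g" "g 0 = x" "g 1 = y" using p by (auto simp: path_component_of_def)
  have "pathin T' (h \<circ> g)" using g(1) h by (simp add: pathin_def continuous_map_compose)
  then show ?thesis using g unfolding path_component_of_def by (intro exI[of _ "h \<circ> g"]) auto
qed



lemma sph_img:
  assumes "sph_map n X x0 g" "x \<in> topspace (cube_top n)" shows "g x \<in> topspace X"
proof -
  have "continuous_map (cube_top n) X g" using assms(1) by (simp add: sph_map_def)
  then show ?thesis using assms(2)
    by (rule continuous_map_image_subset_topspace[THEN subsetD, OF _ imageI])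
qed

lemma weq_transport:
  assumes a: "homeomorphic_maps T U a a'" and b: "homeomorphic_maps T' U' b b'"
    and h: "continuous_map T T' h" and k: "continuous_map U U' k"
    and comm: "\<And>x. x \<in> topspace T \<Longrightarrow> k (a x) = b (h x)"
    and W: "weak_homotopy_equiv T T' h"
  shows "weak_homotopy_equiv U U' k"
proof -
  have ac: "continuous_map T U a" and a'c: "continuous_map U T a'"
    and aa': "\<And>x. x \<in> topspace T \<Longrightarrow> a' (a x) = x" and a'a: "\<And>u. u \<in> topspace U \<Longrightarrow> a (a' u) = u"
    using a by (auto simp: homeomorphic_maps_def)
  have bc: "continuous_map T' U' b" and b'c: "continuous_map U' T' b'"
    and bb': "\<And>x. x \<in> topspace T' \<Longrightarrow> b' (b x) = x" and b'b: "\<And>u. u \<in> topspace U' \<Longrightarrow> b (b' u) = u"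
    using b by (auto simp: homeomorphic_maps_def)
  have inT: "\<And>x. x \<in> topspace T \<Longrightarrow> h x \<in> topspace T'" using h by (auto simp: continuous_map_def)
  have a'T: "\<And>u. u \<in> topspace U \<Longrightarrow> a' u \<in> topspace T" using a'c by (auto simp: continuous_map_def)
  have pi0: "pi0_bij U U' k"
  proof -
    let ?Fh = "\<lambda>C. path_component_of_set T' (h (SOME x. x \<in> C))"
    let ?Fk = "\<lambda>C. path_component_of_set U' (k (SOME x. x \<in> C))"
    have bijh: "bij_betw ?Fh (path_components_of T) (path_components_of T')"
      using W by (simp add: weak_homotopy_equiv_def pi0_bij_def)
    have hmA: "homeomorphic_map T U a" and hmB: "homeomorphic_map T' U' b"
      using a b homeomorphic_maps_map by blast+
    have PU: "path_components_of U = (image a) ` path_components_of T"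
      by (rule homeomorphic_map_path_components_of[OF hmA])
    have PU': "path_components_of U' = (image b) ` path_components_of T'"
      by (rule homeomorphic_map_path_components_of[OF hmB])
    have injA: "inj_on (image a) (path_components_of T)"
      by (rule inj_on_image, rule inj_on_subset[OF homeomorphic_imp_injective_map[OF hmA]])
         (auto simp: path_components_of_def path_component_of_subset_topspace[THEN subsetD])
    have injB: "inj_on (image b) (path_components_of T')"
      by (rule inj_on_image, rule inj_on_subset[OF homeomorphic_imp_injective_map[OF hmB]])
         (auto simp: path_components_of_def path_component_of_subset_topspace[THEN subsetD])
    have bijA: "bij_betw (image a) (path_components_of T) (path_components_of U)"
      using injA PU by (simp add: bij_betw_def)
    have bijB: "bij_betw (image b) (path_components_of T') (path_components_of U')"
      using injB PU' by (simp add: bij_betw_def)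
    have eq: "?Fk (a ` C) = b ` ?Fh C" if C: "C \<in> path_components_of T" for C
    proof -
      obtain x1 where x1: "x1 \<in> topspace T" "C = path_component_of_set T x1"
        using C by (auto simp: path_components_of_def)
      have x1C: "x1 \<in> C" using x1 by (simp add: path_component_of_refl)
      define xs where "xs = (SOME x. x \<in> C)"
      have xs: "xs \<in> C" unfolding xs_def using x1C by (rule someI)
      define y0 where "y0 = (SOME y. y \<in> a ` C)"
      have "y0 \<in> a ` C" unfolding y0_def by (rule someI[of _ "a x1"]) (use x1C in simp)
      then obtain z where z: "z \<in> C" "y0 = a z" by auto
      have p1: "path_component_of T x1 z" using z(1) x1(2) by simp
      have p2: "path_component_of T x1 xs" using xs x1(2) by simp
      have "path_component_of T z xs"
        by (rule path_component_of_trans[OF path_component_of_sym[OF p1] p2])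
      then have "path_component_of T' (h z) (h xs)" by (rule pathin_comp_pc[OF h])
      then have "path_component_of T' (h z) = path_component_of T' (h xs)"
        by (subst (asm) path_component_of_equiv) blast
      then have pe: "path_component_of_set T' (h z) = path_component_of_set T' (h xs)" by simp
      have "z \<in> path_component_of_set T x1" using p1 by simp
      then have zT: "z \<in> topspace T" by (rule subsetD[OF path_component_of_subset_topspace])
      have "?Fk (a ` C) = path_component_of_set U' (k (a z))" using z by (simp add: y0_def)
      also have "\<dots> = path_component_of_set U' (b (h z))" using comm[OF zT] by simp
      also have "\<dots> = b ` path_component_of_set T' (h z)"
        by (rule homeomorphic_map_path_component_of[OF hmB inT[OF zT]])
      also have "\<dots> = b ` ?Fh C" using pe by (simp add: xs_def)
      finally show ?thesis .
    qed
    have "bij_betw (image b \<circ> ?Fh) (path_components_of T) (path_components_of U')"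
      by (rule bij_betw_trans[OF bijh bijB])
    then have "bij_betw (?Fk \<circ> image a) (path_components_of T) (path_components_of U')"
      by (rule bij_betw_cong[THEN iffD1, rotated]) (simp add: eq)
    then have "bij_betw ?Fk (path_components_of U) (path_components_of U')"
      using bij_betw_comp_iff[OF bijA] by blast
    then show ?thesis by (simp add: pi0_bij_def)
  qed
  have pin: "pin_bij n U U' k u0" if u0: "u0 \<in> topspace U" and n: "n \<ge> 1" for u0 n
  proof -
    define x0 where "x0 = a' u0"
    have x0T: "x0 \<in> topspace T" using a'T[OF u0] by (simp add: x0_def)
    have ax0: "a x0 = u0" using a'a[OF u0] by (simp add: x0_def)
    have kx0: "k u0 = b (h x0)" using comm[OF x0T] ax0 by simp
    have PB: "pin_bij n T T' h x0" using W x0T n by (simp add: weak_homotopy_equiv_def)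
    show ?thesis
      unfolding pin_bij_def
    proof (intro conjI allI impI)
      fix g' assume g': "sph_map n U' (k u0) g'"
      have "sph_map n T' (b' (k u0)) (b' \<circ> g')" by (rule sph_map_comp[OF b'c g'])
      moreover have "b' (k u0) = h x0" using kx0 bb' inT[OF x0T] by simp
      ultimately have "sph_map n T' (h x0) (b' \<circ> g')" by simp
      then obtain g where g: "sph_map n T x0 g" and hg: "rel_homotopic n T' (h x0) (h \<circ> g) (b' \<circ> g')"
        using PB unfolding pin_bij_def by blast
      have "sph_map n U (a x0) (a \<circ> g)" by (rule sph_map_comp[OF ac g])
      then have 1: "sph_map n U u0 (a \<circ> g)" using ax0 by simp
      have "rel_homotopic n U' (b (h x0)) (b \<circ> (h \<circ> g)) (b \<circ> (b' \<circ> g'))"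
        by (rule rel_homotopic_comp[OF bc hg])
      then have "rel_homotopic n U' (k u0) (b \<circ> (h \<circ> g)) (b \<circ> (b' \<circ> g'))"
        by (simp only: kx0)
      then have "rel_homotopic n U' (k u0) (k \<circ> (a \<circ> g)) g'"
      proof (rule rel_homotopic_cong)
        fix x assume x: "x \<in> topspace (cube_top n)"
        have "g x \<in> topspace T" using g x by (rule sph_img)
        then show "(b \<circ> (h \<circ> g)) x = (k \<circ> (a \<circ> g)) x" using comm by simp
        have "g' x \<in> topspace U'" using g' x by (rule sph_img)
        then show "(b \<circ> (b' \<circ> g')) x = g' x" using b'b by simp
      qed
      with 1 show "\<exists>g. sph_map n U u0 g \<and> rel_homotopic n U' (k u0) (k \<circ> g) g'" by blast
    next
      fix g1 g2 assume g1: "sph_map n U u0 g1" and g2: "sph_map n U u0 g2"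
        and H: "rel_homotopic n U' (k u0) (k \<circ> g1) (k \<circ> g2)"
      have f1: "sph_map n T x0 (a' \<circ> g1)" using sph_map_comp[OF a'c g1] by (simp add: x0_def)
      have f2: "sph_map n T x0 (a' \<circ> g2)" using sph_map_comp[OF a'c g2] by (simp add: x0_def)
      have "rel_homotopic n T' (b' (k u0)) (b' \<circ> (k \<circ> g1)) (b' \<circ> (k \<circ> g2))"
        by (rule rel_homotopic_comp[OF b'c H])
      moreover have "b' (k u0) = h x0" using kx0 bb' inT[OF x0T] by simp
      moreover have "b' (k (g x)) = h (a' (g x))" if "sph_map n U u0 g" "x \<in> topspace (cube_top n)" for g x
      proof -
        have gx: "g x \<in> topspace U" using that by (rule sph_img)
        have "k (g x) = k (a (a' (g x)))" using a'a[OF gx] by simp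
        also have "\<dots> = b (h (a' (g x)))" using comm[OF a'T[OF gx]] .
        finally show ?thesis using bb' inT[OF a'T[OF gx]] by simp
      qed
      ultimately have "rel_homotopic n T' (h x0) (h \<circ> (a' \<circ> g1)) (h \<circ> (a' \<circ> g2))"
        using g1 g2 by (rule_tac rel_homotopic_cong[of n T' "h x0" "b' \<circ> (k \<circ> g1)" "b' \<circ> (k \<circ> g2)"]) auto
      then have "rel_homotopic n T x0 (a' \<circ> g1) (a' \<circ> g2)"
        using PB f1 f2 unfolding pin_bij_def by blast
      then have "rel_homotopic n U (a x0) (a \<circ> (a' \<circ> g1)) (a \<circ> (a' \<circ> g2))"
        by (rule rel_homotopic_comp[OF ac])
      then have "rel_homotopic n U u0 (a \<circ> (a' \<circ> g1)) (a \<circ> (a' \<circ> g2))"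
        by (simp only: ax0)
      then show "rel_homotopic n U u0 g1 g2"
      proof (rule rel_homotopic_cong)
        fix x assume x: "x \<in> topspace (cube_top n)"
        show "(a \<circ> (a' \<circ> g1)) x = g1 x" using a'a[OF sph_img[OF g1 x]] by simp
        show "(a \<circ> (a' \<circ> g2)) x = g2 x" using a'a[OF sph_img[OF g2 x]] by simp
      qed
    qed
  qed
  show ?thesis using pi0 pin by (simp add: weak_homotopy_equiv_def)
qed

lemma weq_transport_iff:
  assumes a: "homeomorphic_maps T U a a'" and b: "homeomorphic_maps T' U' b b'"
    and h: "continuous_map T T' h"
    and comm: "\<And>x. x \<in> topspace T \<Longrightarrow> k (a x) = b (h x)"
  shows "weak_homotopy_equiv U U' k \<longleftrightarrow> weak_homotopy_equiv T T' h"
proof -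
  have a'c: "continuous_map U T a'" and a'a: "\<And>u. u \<in> topspace U \<Longrightarrow> a (a' u) = u"
    using a by (simp_all add: homeomorphic_maps_def)
  have a'T: "a' u \<in> topspace T" if "u \<in> topspace U" for u
    by (rule continuous_map_image_subset_topspace[THEN subsetD, OF a'c imageI[OF that]])
  have bc: "continuous_map T' U' b" and bb': "\<And>x. x \<in> topspace T' \<Longrightarrow> b' (b x) = x"
    using b by (simp_all add: homeomorphic_maps_def)
  have hT: "h x \<in> topspace T'" if "x \<in> topspace T" for x
    by (rule continuous_map_image_subset_topspace[THEN subsetD, OF h imageI[OF that]])
  have kk: "k u = b (h (a' u))" if u: "u \<in> topspace U" for u
    using comm[OF a'T[OF u]] a'a[OF u] by simp
  have "continuous_map U U' (b \<circ> (h \<circ> a'))"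
    by (rule continuous_map_compose[OF continuous_map_compose[OF a'c h] bc])
  then have k: "continuous_map U U' k"
    by (rule continuous_map_eq) (simp add: kk)
  have comm': "h (a' u) = b' (k u)" if u: "u \<in> topspace U" for u
    using kk[OF u] bb'[OF hT[OF a'T[OF u]]] by simp
  have a2: "homeomorphic_maps U T a' a" by (rule homeomorphic_maps_sym[THEN iffD1, OF a])
  have b2: "homeomorphic_maps U' T' b' b" by (rule homeomorphic_maps_sym[THEN iffD1, OF b])
  show ?thesis
  proof
    assume W: "weak_homotopy_equiv U U' k"
    show "weak_homotopy_equiv T T' h"
      by (rule weq_transport[OF a2 b2 k h _ W]) (rule comm')
  next
    assume W: "weak_homotopy_equiv T T' h"
    show "weak_homotopy_equiv U U' k"
      by (rule weq_transport[OF a b h k _ W]) (rule comm)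
  qed
qed


lemma topspace_CP:
  "topspace (CP n c X \<phi>X) = {g \<in> extensional (standard_simplex n). continuous_map (simplex_top n) X g \<and>
      (\<forall>s\<in>standard_simplex n. \<phi>X (g s) = nerve_strat (push c n s))}"
  by (simp add: CP_def topspace_map_space)

lemma nd_face:
  assumes "nd_simplex P m c" "face k m d" shows "nd_simplex P k (c \<circ> d)"
  using assms unfolding nd_simplex_def face_def
  by (metis comp_apply order_le_less_trans le_less)

lemma face_id': "face m m id" by (simp add: face_def)

lemma pointing_restrict:
  assumes c: "nd_simplex P m c" and d: "face k m d" and \<phi>: "\<phi> \<in> topspace (CP m c X \<phi>X)"
  shows "restrict (\<phi> \<circ> push d k) (standard_simplex k) \<in> topspace (CP k (c \<circ> d) X \<phi>X)"
proof -
  have \<phi>c: "continuous_map (simplex_top m) X \<phi>"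
    and \<phi>F: "\<And>s. s \<in> standard_simplex m \<Longrightarrow> \<phi>X (\<phi> s) = nerve_strat (push c m s)"
    using \<phi> by (auto simp: topspace_CP)
  have "continuous_map (simplex_top k) X (\<phi> \<circ> push d k)"
    by (rule continuous_map_compose[OF push_face_cont[OF d] \<phi>c])
  then have "continuous_map (simplex_top k) X (restrict (\<phi> \<circ> push d k) (standard_simplex k))"
    by (rule continuous_map_eq) simp
  moreover have "\<phi>X (\<phi> (push d k s)) = nerve_strat (push (c \<circ> d) k s)" if s: "s \<in> standard_simplex k" for s
    using \<phi>F[OF push_face_simplex[OF d s]] push_face_comp[OF d, of c s] by simp
  ultimately show ?thesis by (simp add: topspace_CP)
qed

lemma postcomp_f_cont:
  assumes c: "nd_simplex P n c" and \<alpha>: "poset_iso P Q \<alpha>"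
    and f: "stratified_map X P \<phi>X Y Q \<phi>Y f \<alpha>"
  shows "continuous_map (CP n c X \<phi>X) (CP n (\<alpha> \<circ> c) Y \<phi>Y) (postcomp (simplex_top n) f)"
  unfolding CP_def map_space_def
proof (rule dgen_cont_simple)
  have fc: "continuous_map X Y f" and fs: "\<And>x. x \<in> topspace X \<Longrightarrow> \<phi>Y (f x) = \<alpha> (\<phi>X x)"
    using f by (auto simp: stratified_map_def)
  let ?S = "simplex_top n"
  show "continuous_map (subtopology (compact_open ?S X) {g. \<forall>s\<in>topspace ?S. \<phi>X (g s) = nerve_strat (push c n s)})
     (subtopology (compact_open ?S Y) {g. \<forall>s\<in>topspace ?S. \<phi>Y (g s) = nerve_strat (push (\<alpha> \<circ> c) n s)})
     (postcomp ?S f)"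
    unfolding continuous_map_in_subtopology
  proof
    show "continuous_map (subtopology (compact_open ?S X) {g. \<forall>s\<in>topspace ?S. \<phi>X (g s) = nerve_strat (push c n s)})
        (compact_open ?S Y) (postcomp ?S f)"
      by (rule continuous_map_from_subtopology[OF postcomp_cont[OF fc]])
    show "postcomp ?S f \<in> topspace (subtopology (compact_open ?S X) {g. \<forall>s\<in>topspace ?S. \<phi>X (g s) = nerve_strat (push c n s)})
       \<rightarrow> {g. \<forall>s\<in>topspace ?S. \<phi>Y (g s) = nerve_strat (push (\<alpha> \<circ> c) n s)}"
    proof
      fix g assume g: "g \<in> topspace (subtopology (compact_open ?S X) {g. \<forall>s\<in>topspace ?S. \<phi>X (g s) = nerve_strat (push c n s)})"
      then have gc: "continuous_map ?S X g" and gF: "\<And>s. s \<in> standard_simplex n \<Longrightarrow> \<phi>X (g s) = nerve_strat (push c n s)"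
        by (auto simp: topspace_compact_open)
      have "\<phi>Y (postcomp ?S f g s) = nerve_strat (push (\<alpha> \<circ> c) n s)" if s: "s \<in> standard_simplex n" for s
      proof -
        have "g s \<in> topspace X" using gc s by (auto simp: continuous_map_def)
        then show ?thesis using fs gF[OF s] ns_alpha[OF c \<alpha> s] s by (simp add: postcomp_def)
      qed
      then show "postcomp ?S f g \<in> {g. \<forall>s\<in>topspace ?S. \<phi>Y (g s) = nerve_strat (push (\<alpha> \<circ> c) n s)}" by simp
    qed
  qed
qed

lemma weq_step:
  assumes c: "nd_simplex P n c" and \<alpha>: "poset_iso P Q \<alpha>"
    and f: "stratified_map X P \<phi>X Y Q \<phi>Y f \<alpha>" and \<phi>X: "\<phi>X \<in> topspace X \<rightarrow> P"
  shows "weak_homotopy_equiv (CN P n c X \<phi>X) (CN P n c (pullback_top Y \<phi>Y (alex P) \<alpha>) snd)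
           (postcomp (simplex_top n) (\<lambda>(x, t). ((f x, \<phi>X x), t)))
     \<longleftrightarrow> weak_homotopy_equiv (CP n c X \<phi>X) (CP n (\<alpha> \<circ> c) Y \<phi>Y) (postcomp (simplex_top n) f)"
proof (rule weq_transport_iff[OF CP_CN_homeo[OF c \<phi>X] CP_CN_homeo_Y[OF c \<alpha>] postcomp_f_cont[OF c \<alpha> f]])
  fix \<gamma> assume "\<gamma> \<in> topspace (CP n c X \<phi>X)"
  then have \<gamma>F: "\<And>s. s \<in> standard_simplex n \<Longrightarrow> \<phi>X (\<gamma> s) = nerve_strat (push c n s)"
    by (auto simp: topspace_CP)
  show "postcomp (simplex_top n) (\<lambda>(x, t). ((f x, \<phi>X x), t)) (restrict (\<lambda>s. (\<gamma> s, push c n s)) (standard_simplex n)) =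
    restrict (\<lambda>s. ((postcomp (simplex_top n) f \<gamma> s, nerve_strat (push c n s)), push c n s)) (standard_simplex n)"
    using \<gamma>F by (auto simp: postcomp_def fun_eq_iff)
qed

theorem lemma3p9:
  fixes X :: "'a topology" and P :: "'p::order set" and \<phi>X :: "'a \<Rightarrow> 'p"
    and Y :: "'b topology" and Q :: "'q::order set" and \<phi>Y :: "'b \<Rightarrow> 'q"
    and f :: "'a \<Rightarrow> 'b" and \<alpha> :: "'p \<Rightarrow> 'q"
  assumes "stratified X P \<phi>X" and "stratified Y Q \<phi>Y"
    and "stratified_map X P \<phi>X Y Q \<phi>Y f \<alpha>"
    and "poset_iso P Q \<alpha>"
  shows "weq_TopP P X \<phi>X
           (pullback_top Y \<phi>Y (alex P) \<alpha>) snd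
           (\<lambda>x. (f x, \<phi>X x))
         \<longleftrightarrow> spi0_iso P X \<phi>X Y \<phi>Y f \<alpha> \<and> spin_iso P X \<phi>X Y \<phi>Y f \<alpha>"
proof -
  have \<phi>X: "\<phi>X \<in> topspace X \<rightarrow> P" using assms(1) by (simp add: stratified_def)
  let ?WE = "\<lambda>n c. weak_homotopy_equiv (CP n c X \<phi>X) (CP n (\<alpha> \<circ> c) Y \<phi>Y) (postcomp (simplex_top n) f)"
  have L: "weq_TopP P X \<phi>X (pullback_top Y \<phi>Y (alex P) \<alpha>) snd (\<lambda>x. (f x, \<phi>X x))
      \<longleftrightarrow> (\<forall>n c. nd_simplex P n c \<longrightarrow> ?WE n c)"
    unfolding weq_TopP_def using weq_step[OF _ assms(4) assms(3) \<phi>X] by simp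
  have R: "spi0_iso P X \<phi>X Y \<phi>Y f \<alpha> \<and> spin_iso P X \<phi>X Y \<phi>Y f \<alpha>
      \<longleftrightarrow> (\<forall>n c. nd_simplex P n c \<longrightarrow> ?WE n c)"
  proof
    assume A: "spi0_iso P X \<phi>X Y \<phi>Y f \<alpha> \<and> spin_iso P X \<phi>X Y \<phi>Y f \<alpha>"
    show "\<forall>n c. nd_simplex P n c \<longrightarrow> ?WE n c"
    proof (intro allI impI)
      fix n c assume c: "nd_simplex P n c"
      have pi0: "pi0_bij (CP n c X \<phi>X) (CP n (\<alpha> \<circ> c) Y \<phi>Y) (postcomp (simplex_top n) f)"
        using A c by (simp add: spi0_iso_def)
      have "pin_bij k (CP n c X \<phi>X) (CP n (\<alpha> \<circ> c) Y \<phi>Y) (postcomp (simplex_top n) f) x0"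
        if x0: "x0 \<in> topspace (CP n c X \<phi>X)" and k: "k \<ge> 1" for x0 k
      proof -
        have "pin_bij k (CP n (c \<circ> id) X \<phi>X) (CP n (\<alpha> \<circ> c \<circ> id) Y \<phi>Y) (postcomp (simplex_top n) f)
            (restrict (x0 \<circ> push id n) (topspace (simplex_top n)))"
          using A c x0 k face_id' unfolding spin_iso_def by blast
        moreover have "restrict (x0 \<circ> push id n) (topspace (simplex_top n)) = x0"
        proof
          fix s
          have ext: "x0 \<in> extensional (standard_simplex n)" using x0 by (simp add: topspace_CP)
          show "restrict (x0 \<circ> push id n) (topspace (simplex_top n)) s = x0 s"
            using push_id[of s n] ext by (auto simp: extensional_def id_def)
        qed
        ultimately show ?thesis by simp
      qed
      then show "?WE n c" using pi0 by (simp add: weak_homotopy_equiv_def)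
    qed
  next
    assume B: "\<forall>n c. nd_simplex P n c \<longrightarrow> ?WE n c"
    have "spi0_iso P X \<phi>X Y \<phi>Y f \<alpha>"
      unfolding spi0_iso_def using B by (simp add: weak_homotopy_equiv_def)
    moreover have "spin_iso P X \<phi>X Y \<phi>Y f \<alpha>"
      unfolding spin_iso_def
    proof (intro allI impI)
      fix m k n :: nat and c \<phi> and d :: "nat \<Rightarrow> nat"
      assume c: "nd_simplex P m c" and \<phi>: "\<phi> \<in> topspace (CP m c X \<phi>X)" and d: "face k m d" and n: "1 \<le> n"
      have cd: "nd_simplex P k (c \<circ> d)" by (rule nd_face[OF c d])
      have pt: "restrict (\<phi> \<circ> push d k) (standard_simplex k) \<in> topspace (CP k (c \<circ> d) X \<phi>X)"
        by (rule pointing_restrict[OF c d \<phi>])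
      have "?WE k (c \<circ> d)" using B cd by blast
      then have "pin_bij n (CP k (c \<circ> d) X \<phi>X) (CP k (\<alpha> \<circ> (c \<circ> d)) Y \<phi>Y) (postcomp (simplex_top k) f)
          (restrict (\<phi> \<circ> push d k) (standard_simplex k))"
        using pt n by (simp add: weak_homotopy_equiv_def)
      then show "pin_bij n (CP k (c \<circ> d) X \<phi>X) (CP k (\<alpha> \<circ> c \<circ> d) Y \<phi>Y) (postcomp (simplex_top k) f)
          (restrict (\<phi> \<circ> push d k) (topspace (simplex_top k)))"
        by (simp add: comp_assoc)
    qed
    ultimately show "spi0_iso P X \<phi>X Y \<phi>Y f \<alpha> \<and> spin_iso P X \<phi>X Y \<phi>Y f \<alpha>" by simp
  qed
  show ?thesis using L R by simp
qed


end
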